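(* Let $\alpha\in[0,1)$ and $u_1\in\mathbb R$. There exist $\tilde r\in(r_-,r_+)$ sufficiently close to $r_-$ and a constant $C_\alpha>0$ such that for all smooth functions $\phi$ on $\mathcal M$ $$\int_{\{r\le\tilde r\}\cap\{f^-\le u_1\}}\frac{1}{(-\Delta)^\alpha}\phi^2\,\mathrm{vol}\ \le\ C_\alpha\Big(\int_{\Sigma_{\tilde r}\cap\{f^-\le u_1\}}\phi^2\,\mathrm{vol}_{-r}+\int_{\{r\le\tilde r\}\cap\{f^-\le u_1\}}\frac{1}{(-\Delta)^\alpha}(e_3\phi)^2\,\mathrm{vol}\Big).$$
   Context: Fix $M>0$ and $a$ with $0<|a|<M$. Let $\Delta(r)=r^2-2Mr+a^2$ with roots $r_\pm=M\pm\sqrt{M^2-a^2}$, and $\rho^2=r^2+a^2\cos^2\theta$. The Kerr interior is $\mathcal M=\mathbb R_t\times(r_-,r_+)_r\times\mathbb S^2_{(\theta,\varphi)}$ with metric $g=g_{tt}dt^2+g_{t\varphi}(dt\otimes d\varphi+d\varphi\otimes dt)+\frac{\rho^2}{\Delta}dr^2+\rho^2d\theta^2+g_{\varphi\varphi}d\varphi^2$, where $g_{tt}=-1+\frac{2Mr}{\rho^2}$, $g_{t\varphi}=-\frac{2Mra\sin^2\theta}{\rho^2}$, $g_{\varphi\varphi}=\big(r^2+a^2+\frac{2Mra^2\sin^2\theta}{\rho^2}\big)\sin^2\theta$, with volume form $\mathrm{vol}=\rho^2\sin\theta\,dt\wedge dr\wedge d\theta\wedge d\varphi$. Let $r^*$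 satisfy $dr^*/dr=(r^2+a^2)/\Delta$, $v_-=r^*-t$, $f^-=v_--r+r_-$, and $\Sigma_c=\{r=c\}$ with induced volume form defined by $\mathrm{vol}=-dr\wedge\mathrm{vol}_{-r}$. $e_3=\frac{\Delta}{\rho^2}\partial_r-\frac1{\rho^2}\big((r^2+a^2)\partial_t+a\partial_\varphi\big)$ (Boyer–Lindquist coordinate fields). Integrals are of nonnegative functions, with values in $[0,\infty]$. *)

theory Defs
  imports "HOL-Analysis.Analysis"
begin

fun iter_pd :: "'a::euclidean_space list \<Rightarrow> ('a \<Rightarrow> real) \<Rightarrow> 'a \<Rightarrow> real" where
  "iter_pd [] f = f"
| "iter_pd (v # vs) f = (\<lambda>x. deriv (\<lambda>s. iter_pd vs f (x + s *\<^sub>R v)) 0)"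

definition smooth_on :: "'a::euclidean_space set \<Rightarrow> ('a \<Rightarrow> real) \<Rightarrow> bool" where
  "smooth_on U f \<longleftrightarrow> open U \<and>
     (\<forall>vs. set vs \<subseteq> Basis \<longrightarrow>
        continuous_on U (iter_pd vs f) \<and>
        (\<forall>v\<in>Basis. \<forall>x\<in>U. (\<lambda>s. iter_pd vs f (x + s *\<^sub>R v)) differentiable (at 0)))"

definition r_plus :: "real \<Rightarrow> real \<Rightarrow> real" where
  "r_plus M a = M + sqrt (M\<^sup>2 - a\<^sup>2)"

definition r_minus :: "real \<Rightarrow> real \<Rightarrow> real" where
  "r_minus M a = M - sqrt (M\<^sup>2 - a\<^sup>2)"

definition Delta :: "real \<Rightarrow> real \<Rightarrow> real \<Rightarrow> real" where
  "Delta M a r = r\<^sup>2 - 2 * M * r + a\<^sup>2"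

definition rho2 :: "real \<Rightarrow> real \<Rightarrow> real \<Rightarrow> real" where
  "rho2 a r \<theta> = r\<^sup>2 + a\<^sup>2 * (cos \<theta>)\<^sup>2"

text \<open>Points of the ambient space R_t x R_r x R^3; the Kerr interior
  M = R_t x (r_-, r_+) x S^2 is the set below, with S^2 the unit sphere in R^3.\<close>
type_synonym pt = "real \<times> real \<times> real \<times> real \<times> real"

definition kerr_interior :: "real \<Rightarrow> real \<Rightarrow> pt set" where
  "kerr_interior M a = {(t, r, x, y, z). r_minus M a < r \<and> r < r_plus M a \<and> x\<^sup>2 + y\<^sup>2 + z\<^sup>2 = 1}"

text \<open>A smooth function on the Kerr interior (a closed embedded submanifold of an open
  subset of R^5): restriction of a function smooth on an open neighbourhood.\<close>
definition smooth_on_kerr :: "real \<Rightarrow> real \<Rightarrow> (pt \<Rightarrow> real) \<Rightarrow> bool" where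
  "smooth_on_kerr M a F \<longleftrightarrow> (\<exists>U. kerr_interior M a \<subseteq> U \<and> smooth_on U F)"

definition BL :: "(pt \<Rightarrow> real) \<Rightarrow> real \<Rightarrow> real \<Rightarrow> real \<Rightarrow> real \<Rightarrow> real" where
  "BL F t r \<theta> \<phi> = F (t, r, sin \<theta> * cos \<phi>, sin \<theta> * sin \<phi>, cos \<theta>)"

definition e3 :: "real \<Rightarrow> real \<Rightarrow> (pt \<Rightarrow> real) \<Rightarrow> real \<Rightarrow> real \<Rightarrow> real \<Rightarrow> real \<Rightarrow> real" where
  "e3 M a F t r \<theta> \<phi> =
     Delta M a r / rho2 a r \<theta> * deriv (\<lambda>s. BL F t s \<theta> \<phi>) r
     - 1 / rho2 a r \<theta> * ((r\<^sup>2 + a\<^sup>2) * deriv (\<lambda>s. BL F s r \<theta> \<phi>) t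
                         + a * deriv (\<lambda>s. BL F t r \<theta> s) \<phi>)"

text \<open>f^- = v_- - r + r_-, with v_- = r^* - t.\<close>
definition f_minus :: "real \<Rightarrow> real \<Rightarrow> (real \<Rightarrow> real) \<Rightarrow> real \<Rightarrow> real \<Rightarrow> real" where
  "f_minus M a rstar t r = (rstar r - t) - r + r_minus M a"

text \<open>Spacetime integral over {r \<le> rt} \<inter> {f^- \<le> u1} (inside M) of a nonnegative function g
  against vol = rho^2 sin(theta) dt dr dtheta dphi (the poles theta = 0, pi and the
  meridian phi = 0 are null sets).\<close>
definition vol_int :: "real \<Rightarrow> real \<Rightarrow> (real \<Rightarrow> real) \<Rightarrow> real \<Rightarrow> real \<Rightarrow>
    (real \<Rightarrow> real \<Rightarrow> real \<Rightarrow> real \<Rightarrow> real) \<Rightarrow> ennreal" where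
  "vol_int M a rstar rt u1 g =
     (\<integral>\<^sup>+ p. (case p of (t, r, \<theta>, \<phi>) \<Rightarrow>
        (if r_minus M a < r \<and> r \<le> rt \<and> 0 < \<theta> \<and> \<theta> < pi \<and> 0 < \<phi> \<and> \<phi> < 2 * pi
            \<and> f_minus M a rstar t r \<le> u1
         then ennreal (g t r \<theta> \<phi> * rho2 a r \<theta> * sin \<theta>) else 0))
      \<partial>(lborel :: (real \<times> real \<times> real \<times> real) measure))"

text \<open>Integral over Sigma_rt \<inter> {f^- \<le> u1} against vol_{-r} = rho^2 sin(theta) dt dtheta dphi
  (from vol = - dr \<and> vol_{-r}).\<close>
definition surf_int :: "real \<Rightarrow> real \<Rightarrow> (real \<Rightarrow> real) \<Rightarrow> real \<Rightarrow> real \<Rightarrow>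
    (real \<Rightarrow> real \<Rightarrow> real \<Rightarrow> real \<Rightarrow> real) \<Rightarrow> ennreal" where
  "surf_int M a rstar rt u1 g =
     (\<integral>\<^sup>+ p. (case p of (t, \<theta>, \<phi>) \<Rightarrow>
        (if 0 < \<theta> \<and> \<theta> < pi \<and> 0 < \<phi> \<and> \<phi> < 2 * pi \<and> f_minus M a rstar t rt \<le> u1
         then ennreal (g t rt \<theta> \<phi> * rho2 a rt \<theta> * sin \<theta>) else 0))
      \<partial>(lborel :: (real \<times> real \<times> real) measure))"

end

theory Submission
  imports Defs "HOL-Analysis.Analysis"
begin

lemma norm_partial_sum_le:
  fixes h :: "'a::euclidean_space"
  assumes "B \<subseteq> Basis"
  shows "norm (\<Sum>b\<in>B. (h \<bullet> b) *\<^sub>R b) \<le> real (card B) * norm h"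
proof -
  have "norm (\<Sum>b\<in>B. (h \<bullet> b) *\<^sub>R b) \<le> (\<Sum>b\<in>B. norm ((h \<bullet> b) *\<^sub>R b))"
    by (rule norm_sum)
  also have "\<dots> \<le> (\<Sum>b\<in>B. norm h)"
    apply (rule sum_mono)
    using assms by (auto simp: Basis_le_norm)
  also have "\<dots> = real (card B) * norm h" by simp
  finally show ?thesis .
qed

lemma frechet_from_partials:
  fixes f :: "'a::euclidean_space \<Rightarrow> real"
  assumes U: "open U" "x \<in> U"
    and D: "\<And>b y. b \<in> Basis \<Longrightarrow> y \<in> U \<Longrightarrow> ((\<lambda>s. f (y + s *\<^sub>R b)) has_real_derivative D b y) (at 0)"
    and C: "\<And>b. b \<in> Basis \<Longrightarrow> continuous_on U (D b)"
  shows "(f has_derivative (\<lambda>h. \<Sum>b\<in>Basis. (h \<bullet> b) * D b x)) (at x)"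
proof -
  obtain d0 where d0: "d0 > 0" "ball x d0 \<subseteq> U" using U open_contains_ball by blast
  have main: "B \<subseteq> Basis \<Longrightarrow> \<forall>e>0. \<exists>d>0. d \<le> d0 / (real (card B) + 1) \<and> (\<forall>h. norm h < d \<longrightarrow>
      \<bar>f (x + (\<Sum>b\<in>B. (h \<bullet> b) *\<^sub>R b)) - f x - (\<Sum>b\<in>B. (h \<bullet> b) * D b x)\<bar> \<le> e * norm h)" for B
  proof (induction B rule: infinite_finite_induct)
    case (infinite A)
    then show ?case using finite_subset[OF _ finite_Basis] by blast
  next
    case empty
    then show ?case using d0 by (auto intro!: exI[of _ d0])
  next
    case (insert b B)
    have bB: "b \<in> Basis" "B \<subseteq> Basis" using insert by auto
    show ?case
    proof (intro allI impI)
      fix e :: real assume e: "e > 0"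
      obtain d1 where d1: "d1 > 0" "d1 \<le> d0 / (real (card B) + 1)"
        "\<And>h. norm h < d1 \<Longrightarrow> \<bar>f (x + (\<Sum>b\<in>B. (h \<bullet> b) *\<^sub>R b)) - f x - (\<Sum>b\<in>B. (h \<bullet> b) * D b x)\<bar> \<le> e/2 * norm h"
        using insert.IH[OF bB(2)] e by (meson half_gt_zero)
      have "continuous (at x) (D b)"
        using C[OF bB(1)] U continuous_on_eq_continuous_at by blast
      then obtain d2 where d2: "d2 > 0" "\<And>y. dist y x < d2 \<Longrightarrow> dist (D b y) (D b x) < e/2"
        using e unfolding continuous_at_eps_delta by (meson half_gt_zero)
      define N where "N = real (card (insert b B)) + 1"
      have N: "N \<ge> 1" "card (insert b B) = card B + 1" using insert by (auto simp: N_def)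
      define d where "d = min d1 (min d2 d0 / N)"
      have dpos: "d > 0" using d1 d2 d0 N by (auto simp: d_def)
      have mm: "min d2 d0 / N \<le> d0 / N" "min d2 d0 / N \<le> d2 / N" using N
        by (auto intro!: divide_right_mono)
      have "d \<le> d0 / N" using mm by (simp add: d_def)
      moreover have "d \<le> d2 / N" using mm by (simp add: d_def)
      ultimately have dle: "d \<le> d0 / (real (card (insert b B)) + 1)" "d \<le> d2 / N"
        by (auto simp: N_def)
      show "\<exists>d>0. d \<le> d0 / (real (card (insert b B)) + 1) \<and> (\<forall>h. norm h < d \<longrightarrow>
        \<bar>f (x + (\<Sum>b\<in>insert b B. (h \<bullet> b) *\<^sub>R b)) - f x - (\<Sum>b\<in>insert b B. (h \<bullet> b) * D b x)\<bar> \<le> e * norm h)"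
      proof (intro exI[of _ d] conjI dpos dle allI impI)
        fix h :: 'a assume h: "norm h < d"
        define y0 where "y0 = x + (\<Sum>b\<in>B. (h \<bullet> b) *\<^sub>R b)"
        define c where "c = h \<bullet> b"
        have cle: "\<bar>c\<bar> \<le> norm h" using bB by (auto simp: c_def Basis_le_norm)
        have Npos: "N > 0" using N by simp
        have hN: "norm h * N < d2" "norm h * N < d0"
        proof -
          have "norm h * N < d * N" using h Npos by simp
          also have "d * N \<le> d2" using dle Npos by (simp add: field_simps)
          finally show "norm h * N < d2" .
          have "d * N \<le> d0" using dle Npos by (simp add: field_simps N_def)
          with \<open>norm h * N < d * N\<close> show "norm h * N < d0" by simp
        qed
        have closeS: "dist (y0 + s *\<^sub>R b) x \<le> norm h * N" if "\<bar>s\<bar> \<le> \<bar>c\<bar>" for s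
        proof -
          have "dist (y0 + s *\<^sub>R b) x = norm ((\<Sum>b\<in>B. (h \<bullet> b) *\<^sub>R b) + s *\<^sub>R b)"
            by (simp add: y0_def dist_norm)
          also have "\<dots> \<le> norm (\<Sum>b\<in>B. (h \<bullet> b) *\<^sub>R b) + norm (s *\<^sub>R b)" by (rule norm_triangle_ineq)
          also have "\<dots> \<le> real (card B) * norm h + norm h"
            using norm_partial_sum_le[OF bB(2), of h] that cle bB by auto
          also have "\<dots> \<le> norm h * N" using N by (simp add: N_def algebra_simps)
          finally show ?thesis .
        qed
        define S where "S = {-\<bar>c\<bar>..\<bar>c\<bar>}"
        have inU: "y0 + s *\<^sub>R b \<in> U" if "s \<in> S" for s
        proof -
          have "\<bar>s\<bar> \<le> \<bar>c\<bar>" using that by (auto simp: S_def)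
          then have "dist (y0 + s *\<^sub>R b) x < d0" using closeS[of s] hN by linarith
          then show ?thesis using d0 by (auto simp: dist_commute)
        qed
        have der: "((\<lambda>s. f (y0 + s *\<^sub>R b) - s * D b x) has_field_derivative (D b (y0 + s *\<^sub>R b) - D b x)) (at s within S)"
          if "s \<in> S" for s
        proof -
          have "((\<lambda>t. f ((y0 + s *\<^sub>R b) + t *\<^sub>R b)) has_real_derivative D b (y0 + s *\<^sub>R b)) (at 0)"
            using D[OF bB(1) inU[OF that]] .
          then have "((\<lambda>t. f ((y0 + s *\<^sub>R b) + (t + - s) *\<^sub>R b)) has_real_derivative D b (y0 + s *\<^sub>R b)) (at s)"
            using DERIV_shift[where z="-s" and x=s and f="\<lambda>t. f ((y0 + s *\<^sub>R b) + t *\<^sub>R b)"] by simp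
          moreover have "(\<lambda>t. f ((y0 + s *\<^sub>R b) + (t + - s) *\<^sub>R b)) = (\<lambda>t. f (y0 + t *\<^sub>R b))"
          proof
            fix t
            have "(y0 + s *\<^sub>R b) + (t + - s) *\<^sub>R b = y0 + t *\<^sub>R b"
              by (simp add: scaleR_add_left[symmetric] add.assoc)
            then show "f ((y0 + s *\<^sub>R b) + (t + - s) *\<^sub>R b) = f (y0 + t *\<^sub>R b)" by (simp only:)
          qed
          ultimately have d1: "((\<lambda>t. f (y0 + t *\<^sub>R b)) has_real_derivative D b (y0 + s *\<^sub>R b)) (at s)"
            by simp
          have d2: "((\<lambda>t. t * D b x) has_real_derivative D b x) (at s)"
            by (auto intro!: derivative_eq_intros)
          show ?thesis
            using has_field_derivative_at_within[OF DERIV_diff[OF d1 d2]] .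
        qed
        have bnd: "norm (D b (y0 + s *\<^sub>R b) - D b x) \<le> e/2" if "s \<in> S" for s
        proof -
          have "\<bar>s\<bar> \<le> \<bar>c\<bar>" using that by (auto simp: S_def)
          then have "dist (y0 + s *\<^sub>R b) x < d2" using closeS[of s] hN by linarith
          then show ?thesis using d2(2)[of "y0 + s *\<^sub>R b"] by (simp add: dist_real_def)
        qed
        have "norm ((f (y0 + c *\<^sub>R b) - c * D b x) - (f (y0 + 0 *\<^sub>R b) - 0 * D b x)) \<le> e/2 * norm (c - 0)"
          by (rule field_differentiable_bound[of S, OF _ der bnd]) (auto simp: S_def)
        then have step: "\<bar>f (y0 + c *\<^sub>R b) - f y0 - c * D b x\<bar> \<le> e/2 * norm h"
        proof -
          have "e/2 * norm (c - 0) \<le> e/2 * norm h" using cle e by (intro mult_left_mono) auto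
          then show ?thesis using \<open>norm _ \<le> e/2 * norm (c - 0)\<close> by (simp add: algebra_simps)
        qed
        have ih: "\<bar>f y0 - f x - (\<Sum>b\<in>B. (h \<bullet> b) * D b x)\<bar> \<le> e/2 * norm h"
          using d1(3)[of h] h by (simp add: y0_def d_def)
        have eq1: "x + (\<Sum>b\<in>insert b B. (h \<bullet> b) *\<^sub>R b) = y0 + c *\<^sub>R b"
          using insert by (simp add: y0_def c_def algebra_simps)
        have eq2: "(\<Sum>b\<in>insert b B. (h \<bullet> b) * D b x) = c * D b x + (\<Sum>b\<in>B. (h \<bullet> b) * D b x)"
          using insert by (simp add: c_def)
        show "\<bar>f (x + (\<Sum>b\<in>insert b B. (h \<bullet> b) *\<^sub>R b)) - f x - (\<Sum>b\<in>insert b B. (h \<bullet> b) * D b x)\<bar> \<le> e * norm h"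
          unfolding eq1 eq2 using step ih by linarith
      qed
    qed
  qed
  show ?thesis
    unfolding has_derivative_at_alt
  proof (intro conjI allI impI)
    show "bounded_linear (\<lambda>h. \<Sum>b\<in>Basis. h \<bullet> b * D b x)"
      by (intro bounded_linear_sum, rule bounded_linear_compose[OF bounded_linear_mult_left bounded_linear_inner_left])
    fix e :: real assume "e > 0"
    then obtain d where "d > 0" and d: "\<And>h. norm h < d \<Longrightarrow>
      \<bar>f (x + (\<Sum>b\<in>Basis. (h \<bullet> b) *\<^sub>R b)) - f x - (\<Sum>b\<in>Basis. (h \<bullet> b) * D b x)\<bar> \<le> e * norm h"
      using main[of Basis] by blast
    show "\<exists>d>0. \<forall>y. norm (y - x) < d \<longrightarrow> norm (f y - f x - (\<Sum>b\<in>Basis. (y - x) \<bullet> b * D b x)) \<le> e * norm (y - x)"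
    proof (intro exI[of _ d] conjI allI impI \<open>d > 0\<close>)
      fix y assume "norm (y - x) < d"
      from d[OF this] show "norm (f y - f x - (\<Sum>b\<in>Basis. (y - x) \<bullet> b * D b x)) \<le> e * norm (y - x)"
        by (simp add: euclidean_representation)
    qed
  qed
qed

lemma mcomp:
  assumes "Q \<in> borel_measurable borel" "continuous_on UNIV h"
  shows "(\<lambda>x. Q (h x)) \<in> borel_measurable borel"
  using measurable_compose[OF borel_measurable_continuous_onI[OF assms(2)] assms(1)] .

lemma shift_nn:
  fixes f :: "real \<Rightarrow> ennreal"
  assumes [measurable]: "f \<in> borel_measurable borel"
  shows "(\<integral>\<^sup>+x. f x \<partial>lborel) = (\<integral>\<^sup>+x. f (c + x) \<partial>lborel)"
  using nn_integral_real_affine[of f 1 c] by simp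

lemma periodic_window:
  fixes G :: "real \<Rightarrow> ennreal"
  assumes [measurable]: "G \<in> borel_measurable borel"
    and per: "\<And>x k. G (x + 2*pi* of_int k) = G x"
  shows "(\<integral>\<^sup>+x. indicator {d<..<d+2*pi} x * G x \<partial>lborel) = (\<integral>\<^sup>+x. indicator {0<..<2*pi} x * G x \<partial>lborel)"
proof -
  define H where "H d = (\<integral>\<^sup>+x. indicator {d<..<d+2*pi} x * G x \<partial>lborel)" for d
  have Hshift: "H (e + 2*pi* of_int k) = H e" for e k
  proof -
    have "H (e + 2*pi* of_int k) = (\<integral>\<^sup>+x. indicator {e + 2*pi* of_int k<..<e + 2*pi* of_int k+2*pi} (2*pi* of_int k + x) * G (2*pi* of_int k + x) \<partial>lborel)"
      unfolding H_def by (rule shift_nn) measurable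
    also have "\<dots> = H e" unfolding H_def
      using per by (intro nn_integral_cong) (auto simp: indicator_def add.commute)
    finally show ?thesis .
  qed
  have Hbase: "H e = H 0" if e: "0 \<le> e" "e < 2*pi" for e
  proof -
    have "H e = (\<integral>\<^sup>+x. indicator {e<..<2*pi} x * G x + indicator {2*pi..<e+2*pi} x * G x \<partial>lborel)"
      unfolding H_def using e by (intro nn_integral_cong) (auto simp: indicator_def)
    also have "\<dots> = (\<integral>\<^sup>+x. indicator {e<..<2*pi} x * G x \<partial>lborel) + (\<integral>\<^sup>+x. indicator {2*pi..<e+2*pi} x * G x \<partial>lborel)"
      by (rule nn_integral_add) measurable
    also have "(\<integral>\<^sup>+x. indicator {2*pi..<e+2*pi} x * G x \<partial>lborel) = (\<integral>\<^sup>+x. indicator {2*pi..<e+2*pi} (2*pi + x) * G (2*pi + x) \<partial>lborel)"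
      by (rule shift_nn) measurable
    also have "\<dots> = (\<integral>\<^sup>+x. indicator {0..<e} x * G x \<partial>lborel)"
      using per[of _ 1] by (intro nn_integral_cong) (auto simp: indicator_def add.commute)
    also have "(\<integral>\<^sup>+x. indicator {e<..<2*pi} x * G x \<partial>lborel) + (\<integral>\<^sup>+x. indicator {0..<e} x * G x \<partial>lborel)
        = (\<integral>\<^sup>+x. indicator {e<..<2*pi} x * G x + indicator {0..<e} x * G x \<partial>lborel)"
      by (rule nn_integral_add[symmetric]) measurable
    also have "\<dots> = (\<integral>\<^sup>+x. indicator {0<..<2*pi} x * G x \<partial>lborel)"
    proof (rule nn_integral_cong_AE)
      have "AE x in lborel. x \<noteq> e" "AE x in lborel. x \<noteq> (0::real)" by (rule AE_lborel_singleton)+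
      then show "AE x in lborel. indicator {e<..<2*pi} x * G x + indicator {0..<e} x * G x = indicator {0<..<2*pi} x * G x"
      proof eventually_elim
        case (elim x)
        then show ?case using e by (auto simp: indicator_def)
      qed
    qed
    finally show ?thesis by (simp add: H_def)
  qed
  define k where "k = \<lfloor>d / (2*pi)\<rfloor>"
  define e where "e = d - 2*pi* of_int k"
  have e: "0 \<le> e" "e < 2*pi"
  proof -
    have "of_int k \<le> d/(2*pi)" "d/(2*pi) < of_int k + 1" unfolding k_def by linarith+
    then show "0 \<le> e" "e < 2*pi" unfolding e_def by (simp_all add: field_simps)
  qed
  have "H d = H (e + 2*pi* of_int k)" by (simp add: e_def)
  also have "\<dots> = H e" by (rule Hshift)
  also have "\<dots> = H 0" by (rule Hbase[OF e])
  finally show ?thesis by (simp add: H_def)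
qed

lemma periodic_shift:
  fixes G :: "real \<Rightarrow> ennreal"
  assumes [measurable]: "G \<in> borel_measurable borel"
    and per: "\<And>x k. G (x + 2*pi* of_int k) = G x"
  shows "(\<integral>\<^sup>+x. indicator {0<..<2*pi} x * G (x - c) \<partial>lborel) = (\<integral>\<^sup>+x. indicator {0<..<2*pi} x * G x \<partial>lborel)"
proof -
  have "(\<integral>\<^sup>+x. indicator {0<..<2*pi} x * G (x - c) \<partial>lborel) = (\<integral>\<^sup>+x. indicator {0<..<2*pi} (c + x) * G (c + x - c) \<partial>lborel)"
    by (rule shift_nn) measurable
  also have "\<dots> = (\<integral>\<^sup>+x. indicator {-c<..<-c+2*pi} x * G x \<partial>lborel)"
    by (intro nn_integral_cong) (auto simp: indicator_def)
  also have "\<dots> = (\<integral>\<^sup>+x. indicator {0<..<2*pi} x * G x \<partial>lborel)"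
    by (rule periodic_window[OF _ per]) simp
  finally show ?thesis .
qed

lemma lborel_pair_nn:
  fixes f :: "('a::euclidean_space \<times> 'b::euclidean_space) \<Rightarrow> ennreal"
  assumes "f \<in> borel_measurable borel"
  shows "(\<integral>\<^sup>+p. f p \<partial>lborel) = (\<integral>\<^sup>+x. \<integral>\<^sup>+y. f (x,y) \<partial>lborel \<partial>lborel)"
proof -
  have "f \<in> borel_measurable (lborel \<Otimes>\<^sub>M lborel)" using assms by (simp add: lborel_prod)
  from lborel.nn_integral_fst[OF this] show ?thesis by (simp add: lborel_prod)
qed

lemma lborel_swap_nn:
  fixes f :: "'a::euclidean_space \<Rightarrow> 'b::euclidean_space \<Rightarrow> ennreal"
  assumes "case_prod f \<in> borel_measurable borel"
  shows "(\<integral>\<^sup>+x. \<integral>\<^sup>+y. f x y \<partial>lborel \<partial>lborel) = (\<integral>\<^sup>+y. \<integral>\<^sup>+x. f x y \<partial>lborel \<partial>lborel)"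
proof -
  have "case_prod f \<in> borel_measurable (lborel \<Otimes>\<^sub>M lborel)" using assms by (simp add: lborel_prod)
  from lborel_pair.Fubini'[OF this] show ?thesis by simp
qed

lemma iter3:
  fixes f :: "real \<times> real \<times> real \<Rightarrow> ennreal"
  assumes [measurable]: "f \<in> borel_measurable borel"
  shows "(\<integral>\<^sup>+p. f p \<partial>lborel) = (\<integral>\<^sup>+t. \<integral>\<^sup>+x. \<integral>\<^sup>+y. f (t,x,y) \<partial>lborel \<partial>lborel \<partial>lborel)"
proof -
  have "(\<integral>\<^sup>+p. f p \<partial>lborel) = (\<integral>\<^sup>+t. \<integral>\<^sup>+q. f (t,q) \<partial>lborel \<partial>lborel)"
    by (rule lborel_pair_nn) measurable
  also have "\<dots> = (\<integral>\<^sup>+t. \<integral>\<^sup>+x. \<integral>\<^sup>+y. f (t,x,y) \<partial>lborel \<partial>lborel \<partial>lborel)"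
    by (intro nn_integral_cong lborel_pair_nn) measurable
  finally show ?thesis .
qed

lemma meas_test:
  fixes f :: "real \<times> real \<times> real \<Rightarrow> ennreal"
  assumes [measurable]: "f \<in> borel_measurable borel"
  shows "(\<lambda>t. \<integral>\<^sup>+x. \<integral>\<^sup>+y. f (t,x,y) \<partial>lborel \<partial>lborel) \<in> borel_measurable borel"
  by measurable

lemma cv3:
  fixes Q :: "real \<times> real \<times> real \<Rightarrow> ennreal"
  assumes [measurable]: "Q \<in> borel_measurable borel"
    and per: "\<And>t x y k. Q (t, x, y + 2*pi * of_int k) = Q (t, x, y)"
  shows "(\<integral>\<^sup>+p. indicator {0<..<2*pi} (snd (snd p)) * Q p \<partial>lborel)
       = (\<integral>\<^sup>+p. indicator {0<..<2*pi} (snd (snd p)) * Q (fst p - c1, fst (snd p), snd (snd p) - c2) \<partial>lborel)"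
proof -
  have [measurable]: "(\<lambda>p::real\<times>real\<times>real. indicator {0<..<2*pi} (snd (snd p)) :: ennreal) \<in> borel_measurable borel"
    by (rule mcomp[OF borel_measurable_indicator]) (simp, intro continuous_intros)
  have [measurable]: "(\<lambda>p. Q (fst p - c1, fst (snd p), snd (snd p) - c2)) \<in> borel_measurable borel"
    by (rule mcomp[OF assms(1)]) (intro continuous_intros)
  have m1: "(\<lambda>p. indicator {0<..<2*pi} (snd (snd p)) * Q (fst p - c1, fst (snd p), snd (snd p) - c2)) \<in> borel_measurable borel"
    by (intro borel_measurable_times_ennreal; fact)
  have m2: "(\<lambda>p. indicator {0<..<2*pi} (snd (snd p)) * Q p) \<in> borel_measurable borel"
    by (intro borel_measurable_times_ennreal; fact)
  have "(\<integral>\<^sup>+p. indicator {0<..<2*pi} (snd (snd p)) * Q (fst p - c1, fst (snd p), snd (snd p) - c2) \<partial>lborel)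
     = (\<integral>\<^sup>+t. \<integral>\<^sup>+x. \<integral>\<^sup>+y. indicator {0<..<2*pi} y * Q (t - c1, x, y - c2) \<partial>lborel \<partial>lborel \<partial>lborel)"
    by (subst iter3[OF m1]) simp
  also have "\<dots> = (\<integral>\<^sup>+t. \<integral>\<^sup>+x. \<integral>\<^sup>+y. indicator {0<..<2*pi} y * Q (t - c1, x, y) \<partial>lborel \<partial>lborel \<partial>lborel)"
    by (intro nn_integral_cong periodic_shift) (measurable, rule per)
  also have "\<dots> = (\<integral>\<^sup>+t. \<integral>\<^sup>+x. \<integral>\<^sup>+y. indicator {0<..<2*pi} y * Q (c1 + t - c1, x, y) \<partial>lborel \<partial>lborel \<partial>lborel)"
  proof -
    have "(\<lambda>t. \<integral>\<^sup>+x. \<integral>\<^sup>+y. indicator {0<..<2*pi} y * Q (t - c1, x, y) \<partial>lborel \<partial>lborel) \<in> borel_measurable borel"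
      by measurable
    from shift_nn[OF this, of c1] show ?thesis by simp
  qed
  also have "\<dots> = (\<integral>\<^sup>+p. indicator {0<..<2*pi} (snd (snd p)) * Q p \<partial>lborel)"
    by (subst iter3[OF m2]) simp
  finally show ?thesis ..
qed

lemma iter4_inner:
  fixes f :: "real \<times> real \<times> real \<times> real \<Rightarrow> ennreal"
  assumes [measurable]: "f \<in> borel_measurable borel"
  shows "(\<integral>\<^sup>+p. f p \<partial>lborel) = (\<integral>\<^sup>+q. \<integral>\<^sup>+r. f (fst q, r, snd q) \<partial>lborel \<partial>lborel)"
proof -
  have "(\<integral>\<^sup>+p. f p \<partial>lborel) = (\<integral>\<^sup>+t. \<integral>\<^sup>+q. f (t,q) \<partial>lborel \<partial>lborel)"
    by (rule lborel_pair_nn) measurable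
  also have "\<dots> = (\<integral>\<^sup>+t. \<integral>\<^sup>+r. \<integral>\<^sup>+w. f (t,r,w) \<partial>lborel \<partial>lborel \<partial>lborel)"
    by (intro nn_integral_cong lborel_pair_nn) measurable
  also have "\<dots> = (\<integral>\<^sup>+t. \<integral>\<^sup>+w. \<integral>\<^sup>+r. f (t,r,w) \<partial>lborel \<partial>lborel \<partial>lborel)"
    by (intro nn_integral_cong lborel_swap_nn, unfold case_prod_beta', rule mcomp[OF assms], intro continuous_intros)
  also have "\<dots> = (\<integral>\<^sup>+q. \<integral>\<^sup>+r. f (fst q, r, snd q) \<partial>lborel \<partial>lborel)"
  proof -
    have "(\<lambda>q::real\<times>real\<times>real. \<integral>\<^sup>+r. f (fst q, r, snd q) \<partial>lborel) \<in> borel_measurable borel"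
    proof -
      have "(\<lambda>x::(real\<times>real\<times>real)\<times>real. f (fst (fst x), snd x, snd (fst x))) \<in> borel_measurable borel"
        by (rule mcomp[OF assms]) (intro continuous_intros)
      then have "(\<lambda>x::(real\<times>real\<times>real)\<times>real. f (fst (fst x), snd x, snd (fst x))) \<in> borel_measurable (lborel \<Otimes>\<^sub>M lborel)"
        by (simp add: lborel_prod)
      from lborel.borel_measurable_nn_integral_fst[OF this] show ?thesis by simp
    qed
    then show ?thesis by (subst lborel_pair_nn[where f="\<lambda>q. \<integral>\<^sup>+r. f (fst q, r, snd q) \<partial>lborel"]) auto
  qed
  finally show ?thesis .
qed

lemma iter4_outer:
  fixes f :: "real \<times> real \<times> real \<times> real \<Rightarrow> ennreal"
  assumes [measurable]: "f \<in> borel_measurable borel"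
  shows "(\<integral>\<^sup>+p. f p \<partial>lborel) = (\<integral>\<^sup>+r. \<integral>\<^sup>+q. f (fst q, r, snd q) \<partial>lborel \<partial>lborel)"
  unfolding iter4_inner[OF assms]
  by (rule lborel_swap_nn[where f="\<lambda>q r. f (fst q, r, snd q)"])
     (unfold case_prod_beta', rule mcomp[OF assms], intro continuous_intros)

lemma amgm_aux:
  fixes e a b :: real assumes "e > 0"
  shows "2 * a * b \<ge> - (e * a^2 + b^2 / e)"
proof -
  have "0 \<le> (e * a + b)^2 / e" using assms by simp
  also have "(e * a + b)^2 / e = e * a^2 + 2 * a * b + b^2 / e"
    using assms by (simp add: power2_eq_square field_simps)
  finally show ?thesis by simp
qed

lemma hardy_compact_real:
  fixes g g' :: "real \<Rightarrow> real"
  assumes rc: "rm < c" "c \<le> rt" and al: "0 \<le> \<alpha>" "\<alpha> < 1"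
    and gd: "\<And>r. c \<le> r \<Longrightarrow> r \<le> rt \<Longrightarrow> (g has_real_derivative g' r) (at r)"
    and gc: "continuous_on {c..rt} g'"
  shows "integral {c..rt} (\<lambda>r. g r^2 * (r-rm) powr (-\<alpha>))
     \<le> 2*(rt-rm) powr (1-\<alpha>)/(1-\<alpha>) * g rt^2 + 4/(1-\<alpha>)^2 * integral {c..rt} (\<lambda>r. g' r^2 * (r-rm) powr (2-\<alpha>))"
proof -
  define A where "A r = g r^2 * (r-rm) powr (-\<alpha>)" for r
  define B where "B r = g' r^2 * (r-rm) powr (2-\<alpha>)" for r
  define W where "W r = (r-rm) powr (1-\<alpha>) * g r^2" for r
  define W' where "W' r = (1-\<alpha>) * (r-rm) powr (-\<alpha>) * g r^2 + (r-rm) powr (1-\<alpha>) * (2 * g r * g' r)" for r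
  have gcont: "continuous_on {c..rt} g"
    using gd by (meson DERIV_atLeastAtMost_imp_continuous_on)
  have pc: "continuous_on {c..rt} (\<lambda>r. (r - rm) powr p)" for p
    using rc by (intro continuous_intros) auto
  have Acont: "continuous_on {c..rt} A" unfolding A_def
    by (intro continuous_intros gcont pc)
  have Bcont: "continuous_on {c..rt} B" unfolding B_def
    by (intro continuous_intros gc pc)
  have W'cont: "continuous_on {c..rt} W'" unfolding W'_def
    by (intro continuous_intros gc gcont pc)
  have Wder: "(W has_real_derivative W' r) (at r)" if "c \<le> r" "r \<le> rt" for r
  proof -
    have pos: "r - rm > 0" using that rc by simp
    have d1: "((\<lambda>r. (r-rm) powr (1-\<alpha>)) has_real_derivative (1-\<alpha>) * (r-rm) powr (1-\<alpha>-1)) (at r)"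
      using has_real_derivative_powr[OF pos, of "1-\<alpha>"] DERIV_shift[of "\<lambda>x. x powr (1-\<alpha>)" "(1-\<alpha>) * (r-rm) powr (1-\<alpha>-1)" r "-rm"]
      by simp
    have d2: "((\<lambda>r. g r^2) has_real_derivative 2 * g r * g' r) (at r)"
      using DERIV_power[OF gd[OF that], of 2] by (simp add: mult_ac)
    show ?thesis unfolding W_def W'_def
      using DERIV_mult[OF d1 d2] by (simp add: algebra_simps)
  qed
  have FTC: "(W' has_integral (W rt - W c)) {c..rt}"
    using rc by (intro fundamental_theorem_of_calculus)
      (auto intro!: has_real_derivative_iff_has_vector_derivative[THEN iffD1, THEN has_vector_derivative_at_within] Wder)
  have IA: "(A has_integral integral {c..rt} A) {c..rt}"
    using Acont integrable_continuous_interval by blast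
  have IB: "(B has_integral integral {c..rt} B) {c..rt}"
    using Bcont integrable_continuous_interval by blast
  define e where "e = (1-\<alpha>)/2"
  have epos: "e > 0" using al by (simp add: e_def)
  have pt: "W' r \<ge> (1-\<alpha>)/2 * A r - 2/(1-\<alpha>) * B r" if "r \<in> {c..rt}" for r
  proof -
    have pos: "r - rm > 0" using that rc by simp
    define p where "p = (r-rm) powr (-\<alpha>/2)"
    define q where "q = (r-rm) powr (1-\<alpha>/2)"
    have pq: "p * q = (r-rm) powr (1-\<alpha>)" "p^2 = (r-rm) powr (-\<alpha>)" "q^2 = (r-rm) powr (2-\<alpha>)"
      using pos by (simp_all add: p_def q_def powr_add[symmetric] power2_eq_square)
    have "2 * (p * g r) * (q * g' r) \<ge> - (e * (p * g r)^2 + (q * g' r)^2 / e)"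
      by (rule amgm_aux[OF epos])
    then have "2 * (p * q) * g r * g' r \<ge> - (e * p^2 * g r^2 + q^2 * g' r ^2 / e)"
      by (simp add: power_mult_distrib algebra_simps)
    then show ?thesis
      unfolding W'_def A_def B_def pq[symmetric] using al
      by (simp add: e_def field_simps power2_eq_square)
  qed
  have int1: "(\<lambda>r. (1-\<alpha>)/2 * A r) integrable_on {c..rt}"
    by (intro integrable_continuous_interval continuous_intros Acont)
  have int2: "(\<lambda>r. 2/(1-\<alpha>) * B r) integrable_on {c..rt}"
    by (intro integrable_continuous_interval continuous_intros Bcont)
  have int3: "(\<lambda>r. (1-\<alpha>)/2 * A r - 2/(1-\<alpha>) * B r) integrable_on {c..rt}"
    by (intro integrable_continuous_interval continuous_intros Acont Bcont)
  have "integral {c..rt} (\<lambda>r. (1-\<alpha>)/2 * A r - 2/(1-\<alpha>) * B r) \<le> integral {c..rt} W'"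
    using pt FTC int3 by (intro integral_le) (auto simp: has_integral_integrable_integral)
  also have "integral {c..rt} W' = W rt - W c" using FTC by (simp add: integral_unique)
  also have "W c \<ge> 0" by (simp add: W_def)
  then have "W rt - W c \<le> W rt" by simp
  finally have "integral {c..rt} (\<lambda>r. (1-\<alpha>)/2 * A r) - integral {c..rt} (\<lambda>r. 2/(1-\<alpha>) * B r) \<le> W rt"
    using integral_diff[OF int1 int2] by simp
  then have "(1-\<alpha>)/2 * integral {c..rt} A - 2/(1-\<alpha>) * integral {c..rt} B \<le> W rt"
    by simp
  then have h1: "(1-\<alpha>)/2 * integral {c..rt} A \<le> W rt + 2/(1-\<alpha>) * integral {c..rt} B"
    by simp
  have k: "0 < 1 - \<alpha>" using al by simp
  have "integral {c..rt} A = 2/(1-\<alpha>) * ((1-\<alpha>)/2 * integral {c..rt} A)" using k by simp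
  also have "\<dots> \<le> 2/(1-\<alpha>) * (W rt + 2/(1-\<alpha>) * integral {c..rt} B)"
    using h1 k by (intro mult_left_mono) auto
  also have "\<dots> = 2/(1-\<alpha>) * W rt + 4/(1-\<alpha>)^2 * integral {c..rt} B"
  proof -
    have "2/(1-\<alpha>) * (2/(1-\<alpha>) * integral {c..rt} B) = 4/(1-\<alpha>)^2 * integral {c..rt} B"
      by (simp add: power2_eq_square)
    then show ?thesis by (simp add: distrib_left)
  qed
  finally have "integral {c..rt} A \<le> 2/(1-\<alpha>) * W rt + 4/(1-\<alpha>)^2 * integral {c..rt} B" .
  then show ?thesis unfolding A_def[abs_def] B_def[abs_def] W_def by (simp add: mult.assoc)
qed

lemma meas_ind_cont:
  fixes f :: "real \<Rightarrow> real"
  assumes "I \<in> sets borel" "continuous_on I f"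
  shows "(\<lambda>x. ennreal (f x) * indicator I x) \<in> borel_measurable borel"
proof -
  have "(\<lambda>x. indicator I x *\<^sub>R f x) \<in> borel_measurable borel"
    using borel_measurable_continuous_on_indicator[OF assms] .
  then have "(\<lambda>x. ennreal (indicator I x *\<^sub>R f x)) \<in> borel_measurable borel" by measurable
  moreover have "(\<lambda>x. ennreal (indicator I x *\<^sub>R f x)) = (\<lambda>x. ennreal (f x) * indicator I x)"
    by (auto simp: indicator_def)
  ultimately show ?thesis by simp
qed

lemma hardy_interval:
  fixes g g' :: "real \<Rightarrow> real"
  assumes rc: "rm < c" "c \<le> rt" and al: "0 \<le> \<alpha>" "\<alpha> < 1"
    and gd: "\<And>r. c \<le> r \<Longrightarrow> r \<le> rt \<Longrightarrow> (g has_real_derivative g' r) (at r)"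
    and gc: "continuous_on {c..rt} g'"
  shows "(\<integral>\<^sup>+r. ennreal (g r^2 * (r-rm) powr (-\<alpha>)) * indicator {c..rt} r \<partial>lborel)
     \<le> ennreal (2*(rt-rm) powr (1-\<alpha>)/(1-\<alpha>) * g rt^2) + ennreal (4/(1-\<alpha>)^2) *
        (\<integral>\<^sup>+r. ennreal (g' r^2 * (r-rm) powr (2-\<alpha>)) * indicator {c..rt} r \<partial>lborel)"
proof -
  have gcont: "continuous_on {c..rt} g"
    using gd by (meson DERIV_atLeastAtMost_imp_continuous_on)
  have pc: "continuous_on {c..rt} (\<lambda>r. (r - rm) powr p)" for p
    using rc by (intro continuous_intros) auto
  have IA: "((\<lambda>r. g r^2 * (r-rm) powr (-\<alpha>)) has_integral integral {c..rt} (\<lambda>r. g r^2 * (r-rm) powr (-\<alpha>))) {c..rt}"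
    by (intro integrable_integral integrable_continuous_interval continuous_intros gcont pc)
  have IB: "((\<lambda>r. g' r^2 * (r-rm) powr (2-\<alpha>)) has_integral integral {c..rt} (\<lambda>r. g' r^2 * (r-rm) powr (2-\<alpha>))) {c..rt}"
    by (intro integrable_integral integrable_continuous_interval continuous_intros gc pc)
  have e1: "(\<integral>\<^sup>+r. ennreal (g r^2 * (r-rm) powr (-\<alpha>)) * indicator {c..rt} r \<partial>lborel)
      = ennreal (integral {c..rt} (\<lambda>r. g r^2 * (r-rm) powr (-\<alpha>)))"
    by (rule nn_integral_has_integral_lebesgue'[OF _ IA]) simp
  have e2: "(\<integral>\<^sup>+r. ennreal (g' r^2 * (r-rm) powr (2-\<alpha>)) * indicator {c..rt} r \<partial>lborel)
      = ennreal (integral {c..rt} (\<lambda>r. g' r^2 * (r-rm) powr (2-\<alpha>)))"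
    by (rule nn_integral_has_integral_lebesgue'[OF _ IB]) simp
  have nnB: "integral {c..rt} (\<lambda>r. g' r^2 * (r-rm) powr (2-\<alpha>)) \<ge> 0"
    by (rule integral_nonneg[OF has_integral_integrable[OF IB]]) simp
  have nn2: "2*(rt-rm) powr (1-\<alpha>)/(1-\<alpha>) * g rt^2 \<ge> 0" using al by simp
  have "ennreal (integral {c..rt} (\<lambda>r. g r^2 * (r-rm) powr (-\<alpha>)))
     \<le> ennreal (2*(rt-rm) powr (1-\<alpha>)/(1-\<alpha>) * g rt^2 + 4/(1-\<alpha>)^2 * integral {c..rt} (\<lambda>r. g' r^2 * (r-rm) powr (2-\<alpha>)))"
    by (intro ennreal_leI hardy_compact_real[OF rc al gd gc])
  also have "\<dots> = ennreal (2*(rt-rm) powr (1-\<alpha>)/(1-\<alpha>) * g rt^2) + ennreal (4/(1-\<alpha>)^2) *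
        ennreal (integral {c..rt} (\<lambda>r. g' r^2 * (r-rm) powr (2-\<alpha>)))"
    using nnB nn2 by (simp add: ennreal_plus[symmetric] ennreal_mult[symmetric] del: ennreal_plus)
  finally show ?thesis unfolding e1 e2 .
qed

lemma hardy_set:
  fixes g g' \<psi> :: "real \<Rightarrow> real"
  assumes rr: "rm < rt" and al: "0 \<le> \<alpha>" "\<alpha> < 1"
    and gd: "\<And>r. rm < r \<Longrightarrow> r \<le> rt \<Longrightarrow> (g has_real_derivative g' r) (at r)"
    and gc: "continuous_on {rm<..rt} g'"
    and \<psi>d: "\<And>r. rm < r \<Longrightarrow> r \<le> rt \<Longrightarrow> \<exists>y. (\<psi> has_real_derivative y) (at r) \<and> y < 0"
  shows "(\<integral>\<^sup>+r. ennreal (g r^2 * (r-rm) powr (-\<alpha>)) * indicator {r. rm<r \<and> r\<le>rt \<and> \<psi> r \<le> K} r \<partial>lborel)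
   \<le> ennreal (2*(rt-rm) powr (1-\<alpha>)/(1-\<alpha>) * g rt^2) * indicator {r. rm<r \<and> r\<le>rt \<and> \<psi> r \<le> K} rt
     + ennreal (4/(1-\<alpha>)^2) * (\<integral>\<^sup>+r. ennreal (g' r^2 * (r-rm) powr (2-\<alpha>)) * indicator {r. rm<r \<and> r\<le>rt \<and> \<psi> r \<le> K} r \<partial>lborel)"
  (is "?L \<le> ?R")
proof -
  define S where "S = {r. rm<r \<and> r\<le>rt \<and> \<psi> r \<le> K}"
  have dec: "\<psi> y < \<psi> x" if "rm < x" "x < y" "y \<le> rt" for x y
    using DERIV_neg_imp_decreasing[of x y \<psi>] \<psi>d that by force
  show ?thesis
  proof (cases "rt \<in> S")
    case False
    have "S = {}"
    proof (rule ccontr)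
      assume "S \<noteq> {}"
      then obtain r where r: "r \<in> S" by blast
      then have "r \<noteq> rt" using False by auto
      then have "\<psi> rt < \<psi> r" using r dec[of r rt] by (auto simp: S_def)
      then show False using r False rr by (auto simp: S_def)
    qed
    then show ?thesis by (simp add: S_def[symmetric])
  next
    case True
    have psic: "continuous_on {c..rt} \<psi>" if "rm < c" for c
    proof -
      have "\<forall>x. c \<le> x \<and> x \<le> rt \<longrightarrow> \<psi> differentiable (at x)"
        using \<psi>d that real_differentiable_def by (metis less_le_trans)
      then show ?thesis by (meson DERIV_atLeastAtMost_imp_continuous_on real_differentiable_def)
    qed
    have interval: "\<exists>c'. c \<le> c' \<and> c' \<le> rt \<and> S \<inter> {c..rt} = {c'..rt}" if c: "rm < c" "c \<le> rt" for c
    proof (cases "\<psi> c \<le> K")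
      case True
      have "S \<inter> {c..rt} = {c..rt}"
      proof -
        have "\<psi> r \<le> K" if "c \<le> r" "r \<le> rt" for r
          using dec[of c r] True that c by (cases "c = r") force+
        then show ?thesis using c by (auto simp: S_def)
      qed
      then show ?thesis using c by auto
    next
      case False
      have "\<psi> rt \<le> K" using \<open>rt \<in> S\<close> by (simp add: S_def)
      then obtain x where x: "c \<le> x" "x \<le> rt" "\<psi> x = K"
        using IVT2'[of \<psi> rt K c, OF _ _ c(2) psic[OF c(1)]] False by auto
      have "S \<inter> {c..rt} = {x..rt}"
      proof (intro set_eqI iffI)
        fix r assume r: "r \<in> S \<inter> {c..rt}"
        show "r \<in> {x..rt}"
        proof (rule ccontr)
          assume "r \<notin> {x..rt}"
          then have "r < x" using r by (auto simp: S_def)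
          then have "\<psi> x < \<psi> r" using dec[of r x] r x c by auto
          then show False using r x by (auto simp: S_def)
        qed
      next
        fix r assume r: "r \<in> {x..rt}"
        have "\<psi> r \<le> K" using dec[of x r] r x c by (cases "x = r") force+
        then show "r \<in> S \<inter> {c..rt}" using r x c by (auto simp: S_def)
      qed
      then show ?thesis using x by auto
    qed
    have bound: "(\<integral>\<^sup>+r. ennreal (g r^2 * (r-rm) powr (-\<alpha>)) * indicator (S \<inter> {c..rt}) r \<partial>lborel) \<le> ?R"
      if c: "rm < c" "c \<le> rt" for c
    proof -
      obtain c' where c': "c \<le> c'" "c' \<le> rt" "S \<inter> {c..rt} = {c'..rt}" using interval[OF c] by blast
      have rc': "rm < c'" using c c' by simp
      have gc': "continuous_on {c'..rt} g'" using rc' by (intro continuous_on_subset[OF gc]) auto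
      have "(\<integral>\<^sup>+r. ennreal (g r^2 * (r-rm) powr (-\<alpha>)) * indicator (S \<inter> {c..rt}) r \<partial>lborel)
          \<le> ennreal (2*(rt-rm) powr (1-\<alpha>)/(1-\<alpha>) * g rt^2) + ennreal (4/(1-\<alpha>)^2) *
        (\<integral>\<^sup>+r. ennreal (g' r^2 * (r-rm) powr (2-\<alpha>)) * indicator {c'..rt} r \<partial>lborel)"
        unfolding c'(3) using rc' c' by (intro hardy_interval[OF rc' c'(2) al gd gc']) auto
      also have "\<dots> \<le> ?R"
      proof -
        have i1: "indicator S rt = (1::ennreal)" using True by simp
        have "(\<integral>\<^sup>+r. ennreal (g' r^2 * (r-rm) powr (2-\<alpha>)) * indicator {c'..rt} r \<partial>lborel)
            \<le> (\<integral>\<^sup>+r. ennreal (g' r^2 * (r-rm) powr (2-\<alpha>)) * indicator S r \<partial>lborel)"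
          by (intro nn_integral_mono mult_left_mono indicator_leI) (use c'(3) in auto)
        then show ?thesis unfolding S_def[symmetric] i1 by (intro add_mono mult_left_mono) auto
      qed
      finally show ?thesis .
    qed
    define cn where "cn n = rm + (rt - rm) / (real n + 1)" for n :: nat
    have cn: "rm < cn n" "cn n \<le> rt" for n
      using rr by (auto simp: cn_def field_simps intro: mult_right_mono)
    have cn_mono: "cn (Suc n) \<le> cn n" for n
      using rr by (auto simp: cn_def intro!: divide_left_mono)
    have "?L = (\<integral>\<^sup>+r. (SUP n. ennreal (g r^2 * (r-rm) powr (-\<alpha>)) * indicator (S \<inter> {cn n..rt}) r) \<partial>lborel)"
    proof (intro nn_integral_cong)
      fix r
      show "ennreal (g r^2 * (r-rm) powr (-\<alpha>)) * indicator {r. rm<r \<and> r\<le>rt \<and> \<psi> r \<le> K} r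
          = (SUP n. ennreal (g r^2 * (r-rm) powr (-\<alpha>)) * indicator (S \<inter> {cn n..rt}) r)"
      proof (cases "r \<in> S")
        case False
        then show ?thesis by (simp add: S_def[symmetric])
      next
        case True
        then have "r - rm > 0" by (simp add: S_def)
        then obtain N :: nat where N: "(rt - rm) / (r - rm) < real N" using reals_Archimedean2 by blast
        have "cn N \<le> r"
        proof -
          have "(rt - rm) < real N * (r - rm)" using N \<open>r - rm > 0\<close> by (simp add: field_simps)
          then have "(rt - rm) \<le> (real N + 1) * (r - rm)" using \<open>r - rm > 0\<close> by (simp add: algebra_simps)
          then show ?thesis by (simp add: cn_def field_simps)
        qed
        have "(SUP n. ennreal (g r^2 * (r-rm) powr (-\<alpha>)) * indicator (S \<inter> {cn n..rt}) r) = ennreal (g r^2 * (r-rm) powr (-\<alpha>))"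
        proof (intro antisym SUP_least)
          show "ennreal (g r^2 * (r-rm) powr (-\<alpha>)) * indicator (S \<inter> {cn n..rt}) r \<le> ennreal (g r^2 * (r-rm) powr (-\<alpha>))" for n
            by (auto split: split_indicator)
          have "ennreal (g r^2 * (r-rm) powr (-\<alpha>)) = ennreal (g r^2 * (r-rm) powr (-\<alpha>)) * indicator (S \<inter> {cn N..rt}) r"
            using True \<open>cn N \<le> r\<close> by (auto simp: S_def)
          also have "\<dots> \<le> (SUP n. ennreal (g r^2 * (r-rm) powr (-\<alpha>)) * indicator (S \<inter> {cn n..rt}) r)"
            by (rule SUP_upper) simp
          finally show "ennreal (g r^2 * (r-rm) powr (-\<alpha>)) \<le> (SUP n. ennreal (g r^2 * (r-rm) powr (-\<alpha>)) * indicator (S \<inter> {cn n..rt}) r)" .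
        qed
        then show ?thesis using True by (simp add: S_def[symmetric])
      qed
    qed
    also have "\<dots> = (SUP n. \<integral>\<^sup>+r. ennreal (g r^2 * (r-rm) powr (-\<alpha>)) * indicator (S \<inter> {cn n..rt}) r \<partial>lborel)"
    proof (rule nn_integral_monotone_convergence_SUP)
      show "incseq (\<lambda>n r. ennreal (g r^2 * (r-rm) powr (-\<alpha>)) * indicator (S \<inter> {cn n..rt}) r)"
      proof (rule incseq_SucI, rule le_funI)
        fix n r
        show "ennreal (g r^2 * (r-rm) powr (-\<alpha>)) * indicator (S \<inter> {cn n..rt}) r \<le> ennreal (g r^2 * (r-rm) powr (-\<alpha>)) * indicator (S \<inter> {cn (Suc n)..rt}) r"
          by (intro mult_left_mono indicator_leI) (use cn_mono[of n] in auto)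
      qed
      fix n
      obtain c' where c': "cn n \<le> c'" "c' \<le> rt" "S \<inter> {cn n..rt} = {c'..rt}" using interval[OF cn] by blast
      have "continuous_on {c'..rt} g"
      proof (rule DERIV_atLeastAtMost_imp_continuous_on)
        fix x assume "c' \<le> x" "x \<le> rt"
        then have "rm < x" using c'(1) cn[of n] by linarith
        then show "\<exists>y. (g has_real_derivative y) (at x)" using gd \<open>x \<le> rt\<close> by blast
      qed
      then have "continuous_on {c'..rt} (\<lambda>r. g r^2 * (r-rm) powr (-\<alpha>))"
        using c' cn[of n] by (intro continuous_intros) auto
      then show "(\<lambda>r. ennreal (g r^2 * (r-rm) powr (-\<alpha>)) * indicator (S \<inter> {cn n..rt}) r) \<in> borel_measurable lborel"
        unfolding c'(3) measurable_lborel2 by (intro meas_ind_cont) auto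
    qed
    also have "\<dots> \<le> ?R"
      by (intro SUP_least bound cn)
    finally show ?thesis .
  qed
qed

definition DFo :: "(pt \<Rightarrow> real) \<Rightarrow> pt \<Rightarrow> pt \<Rightarrow> real" where
  "DFo F x h = (\<Sum>b\<in>Basis. (h \<bullet> b) * iter_pd [b] F x)"

lemma DFo_add: "DFo F x (u + v) = DFo F x u + DFo F x v"
  by (simp add: DFo_def inner_add_left distrib_right sum.distrib)

lemma DFo_scale: "DFo F x (c *\<^sub>R v) = c * DFo F x v"
  by (simp add: DFo_def sum_distrib_left mult_ac)

lemma DFo_uminus: "DFo F x (- v) = - DFo F x v"
  using DFo_scale[of F x "-1" v] by simp

lemma smooth_cont: "smooth_on U F \<Longrightarrow> continuous_on U F"
  unfolding smooth_on_def by (metis empty_subsetI iter_pd.simps(1) list.set(1))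

lemma smooth_deriv:
  assumes "smooth_on U F" "x \<in> U"
  shows "(F has_derivative DFo F x) (at x)"
proof -
  have U: "open U" using assms unfolding smooth_on_def by auto
  have D: "((\<lambda>s. F (y + s *\<^sub>R b)) has_real_derivative iter_pd [b] F y) (at 0)" if "b \<in> Basis" "y \<in> U" for b y
  proof -
    have "(\<lambda>s. iter_pd [] F (y + s *\<^sub>R b)) differentiable (at 0)"
      using assms(1) that unfolding smooth_on_def by (metis empty_subsetI list.set(1))
    then have "((\<lambda>s. F (y + s *\<^sub>R b)) has_real_derivative deriv (\<lambda>s. F (y + s *\<^sub>R b)) 0) (at 0)"
      using DERIV_deriv_iff_real_differentiable by simp
    then show ?thesis by simp
  qed
  have C: "continuous_on U (iter_pd [b] F)" if "b \<in> Basis" for b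
  proof -
    have "set [b] \<subseteq> Basis" using that by simp
    then show ?thesis using assms(1) unfolding smooth_on_def by blast
  qed
  show ?thesis
    unfolding DFo_def[abs_def] using frechet_from_partials[OF U assms(2) D C] by simp
qed

lemma DFo_cont:
  assumes "smooth_on U F" "continuous_on S x" "continuous_on S h" "x ` S \<subseteq> U"
  shows "continuous_on S (\<lambda>s. DFo F (x s) (h s))"
proof -
  have C: "continuous_on U (iter_pd [b] F)" if "b \<in> Basis" for b
  proof -
    have "set [b] \<subseteq> Basis" using that by simp
    then show ?thesis using assms(1) unfolding smooth_on_def by blast
  qed
  show ?thesis unfolding DFo_def
    by (intro continuous_on_sum continuous_on_mult continuous_on_inner assms(3) continuous_on_const
        continuous_on_compose2[OF C assms(2) assms(4)])
qed

lemma curve_deriv: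
  assumes "smooth_on U F" "c s \<in> U" "(c has_vector_derivative v) (at s within S)"
  shows "((\<lambda>t. F (c t)) has_real_derivative DFo F (c s) v) (at s within S)"
proof -
  have "((\<lambda>t. F (c t)) has_derivative (\<lambda>h. DFo F (c s) (h *\<^sub>R v))) (at s within S)"
    using has_derivative_compose[OF assms(3)[unfolded has_vector_derivative_def] smooth_deriv[OF assms(1,2)]] .
  moreover have "(\<lambda>h. DFo F (c s) (h *\<^sub>R v)) = (*) (DFo F (c s) v)"
    by (auto simp: DFo_scale)
  ultimately show ?thesis by (simp add: has_field_derivative_def)
qed

definition spt :: "real \<Rightarrow> real \<Rightarrow> real \<Rightarrow> real \<Rightarrow> pt" where
  "spt t r \<theta> \<phi> = (t, r, sin \<theta> * cos \<phi>, sin \<theta> * sin \<phi>, cos \<theta>)"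

lemma BL_spt: "BL F t r \<theta> \<phi> = F (spt t r \<theta> \<phi>)"
  by (simp add: BL_def spt_def)

lemma spt_kerr: "r_minus M a < r \<Longrightarrow> r < r_plus M a \<Longrightarrow> spt t r \<theta> \<phi> \<in> kerr_interior M a"
proof -
  assume "r_minus M a < r" "r < r_plus M a"
  moreover have "(sin \<theta> * cos \<phi>)\<^sup>2 + (sin \<theta> * sin \<phi>)\<^sup>2 + (cos \<theta>)\<^sup>2 = 1"
  proof -
    have "(sin \<theta> * cos \<phi>)\<^sup>2 + (sin \<theta> * sin \<phi>)\<^sup>2 = (sin \<theta>)\<^sup>2 * ((cos \<phi>)\<^sup>2 + (sin \<phi>)\<^sup>2)"
      by (simp only: power_mult_distrib distrib_left mult.commute)
    also have "\<dots> = (sin \<theta>)\<^sup>2" by (simp only: sin_cos_squared_add2 mult_1_right)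
    finally show ?thesis by (simp only: sin_cos_squared_add)
  qed
  ultimately show ?thesis by (simp add: kerr_interior_def spt_def)
qed

definition et :: pt where "et = (1, 0, 0, 0, 0)"
definition er :: pt where "er = (0, 1, 0, 0, 0)"
definition ew :: "real \<Rightarrow> real \<Rightarrow> pt" where "ew \<theta> \<phi> = (0, 0, - (sin \<theta> * sin \<phi>), sin \<theta> * cos \<phi>, 0)"

lemma vd_t: "((\<lambda>s. spt s r \<theta> \<phi>) has_vector_derivative et) (at t)"
  unfolding spt_def et_def
  by (intro has_vector_derivative_Pair has_vector_derivative_const has_vector_derivative_id)

lemma vd_r: "((\<lambda>s. spt t s \<theta> \<phi>) has_vector_derivative er) (at r)"
  unfolding spt_def er_def
  by (intro has_vector_derivative_Pair has_vector_derivative_const has_vector_derivative_id)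

lemma vd_phi: "((\<lambda>s. spt t r \<theta> s) has_vector_derivative ew \<theta> \<phi>) (at \<phi>)"
proof -
  have 1: "((\<lambda>s. sin \<theta> * cos s) has_vector_derivative - (sin \<theta> * sin \<phi>)) (at \<phi>)"
    unfolding has_real_derivative_iff_has_vector_derivative[symmetric]
    by (auto intro!: derivative_eq_intros)
  have 2: "((\<lambda>s. sin \<theta> * sin s) has_vector_derivative sin \<theta> * cos \<phi>) (at \<phi>)"
    unfolding has_real_derivative_iff_has_vector_derivative[symmetric]
    by (auto intro!: derivative_eq_intros)
  show ?thesis unfolding spt_def ew_def
    by (intro has_vector_derivative_Pair has_vector_derivative_const 1 2)
qed

definition E3x :: "real \<Rightarrow> real \<Rightarrow> (pt \<Rightarrow> real) \<Rightarrow> real \<Rightarrow> real \<Rightarrow> real \<Rightarrow> real \<Rightarrow> real" where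
  "E3x M a F t r \<theta> \<phi> =
     Delta M a r / rho2 a r \<theta> * DFo F (spt t r \<theta> \<phi>) er
     - 1 / rho2 a r \<theta> * ((r\<^sup>2 + a\<^sup>2) * DFo F (spt t r \<theta> \<phi>) et + a * DFo F (spt t r \<theta> \<phi>) (ew \<theta> \<phi>))"

lemma e3_eq:
  assumes "smooth_on U F" "spt t r \<theta> \<phi> \<in> U"
  shows "e3 M a F t r \<theta> \<phi> = E3x M a F t r \<theta> \<phi>"
proof -
  have "deriv (\<lambda>s. BL F s r \<theta> \<phi>) t = DFo F (spt t r \<theta> \<phi>) et"
    unfolding BL_spt
    by (rule DERIV_imp_deriv, rule curve_deriv[OF assms(1) _ vd_t]) (use assms(2) in simp)
  moreover have "deriv (\<lambda>s. BL F t s \<theta> \<phi>) r = DFo F (spt t r \<theta> \<phi>) er"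
    unfolding BL_spt
    by (rule DERIV_imp_deriv, rule curve_deriv[OF assms(1) _ vd_r]) (use assms(2) in simp)
  moreover have "deriv (\<lambda>s. BL F t r \<theta> s) \<phi> = DFo F (spt t r \<theta> \<phi>) (ew \<theta> \<phi>)"
    unfolding BL_spt
    by (rule DERIV_imp_deriv, rule curve_deriv[OF assms(1) _ vd_phi]) (use assms(2) in simp)
  ultimately show ?thesis by (simp add: e3_def E3x_def)
qed

lemma kerr_consts:
  fixes M a :: real
  assumes "M > 0" "0 < \<bar>a\<bar>" "\<bar>a\<bar> < M"
  shows "sqrt (M\<^sup>2 - a\<^sup>2) > 0" "sqrt (M\<^sup>2 - a\<^sup>2) < M"
    "r_minus M a = M - sqrt (M\<^sup>2 - a\<^sup>2)" "r_plus M a = M + sqrt (M\<^sup>2 - a\<^sup>2)"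
    "r_minus M a > 0" "\<And>r. Delta M a r = (r - r_plus M a) * (r - r_minus M a)"
proof -
  have a2: "a\<^sup>2 < M\<^sup>2" using power_strict_mono[OF assms(3) abs_ge_zero, of 2] by simp
  show "sqrt (M\<^sup>2 - a\<^sup>2) > 0" using a2 by simp
  have "a\<^sup>2 > 0" using assms by simp
  then have "M\<^sup>2 - a\<^sup>2 < M\<^sup>2" by simp
  then have "sqrt (M\<^sup>2 - a\<^sup>2) < sqrt (M\<^sup>2)" by (rule real_sqrt_less_mono)
  then show "sqrt (M\<^sup>2 - a\<^sup>2) < M" using assms by simp
  then show "r_minus M a > 0" by (simp add: r_minus_def)
  show "r_minus M a = M - sqrt (M\<^sup>2 - a\<^sup>2)" "r_plus M a = M + sqrt (M\<^sup>2 - a\<^sup>2)"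
    by (simp_all add: r_minus_def r_plus_def)
  fix r
  have s2: "(sqrt (M\<^sup>2 - a\<^sup>2))\<^sup>2 = M\<^sup>2 - a\<^sup>2" using a2 by simp
  show "Delta M a r = (r - r_plus M a) * (r - r_minus M a)"
    unfolding Delta_def r_plus_def r_minus_def
    using s2 by (simp add: algebra_simps power2_eq_square)
qed

definition eta :: "real \<Rightarrow> real \<Rightarrow> real \<Rightarrow> real" where
  "eta M a r = a / (r_plus M a - r_minus M a) * (ln (r_plus M a - r) - ln (r - r_minus M a))"

lemma eta_deriv:
  assumes "r_minus M a < r" "r < r_plus M a"
    and D: "Delta M a r = (r - r_plus M a) * (r - r_minus M a)"
  shows "(eta M a has_real_derivative a / Delta M a r) (at r)"
proof -
  let ?p = "r_plus M a" and ?m = "r_minus M a"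
  have pos: "?p - ?m > 0" "?p - r > 0" "r - ?m > 0" using assms by auto
  have "(eta M a has_real_derivative a / (?p - ?m) * (- inverse (?p - r) - inverse (r - ?m))) (at r)"
    unfolding eta_def[abs_def] using pos
    by (auto intro!: derivative_eq_intros simp: divide_inverse)
  moreover have "a / (?p - ?m) * (- inverse (?p - r) - inverse (r - ?m)) = a / Delta M a r"
  proof -
    have aux: "a / (x + y) * (- inverse y - inverse x) = a / ((- y) * x)" if "x > 0" "y > 0" for x y :: real
    proof -
      have nz: "x + y \<noteq> 0" "x \<noteq> 0" "y \<noteq> 0" using that by auto
      have g: "a / z * (- z / w) = - a / w" if "z \<noteq> 0" "w \<noteq> 0" for z w :: real
        using that by (simp add: field_simps)
      have e1: "- inverse y - inverse x = - (x + y) / (x * y)" using nz by (simp add: field_simps)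
      have "a / (x + y) * (- (x + y) / (x * y)) = - a / (x * y)" by (rule g) (use nz in auto)
      then show ?thesis unfolding e1 by simp
    qed
    have "?p - ?m = (r - ?m) + (?p - r)" "r - ?p = - (?p - r)" by simp_all
    then show ?thesis unfolding D using aux[OF pos(3) pos(2)] by simp
  qed
  ultimately show ?thesis by simp
qed

lemma eta_cont: "continuous_on {r_minus M a<..<r_plus M a} (eta M a)"
  unfolding eta_def[abs_def] by (intro continuous_intros) auto

definition gam :: "real \<Rightarrow> real \<Rightarrow> (real \<Rightarrow> real) \<Rightarrow> real \<Rightarrow> real \<Rightarrow> real \<Rightarrow> real \<Rightarrow> pt" where
  "gam M a rs T \<theta> P r = spt (T - rs r) r \<theta> (P - eta M a r)"

definition gv :: "real \<Rightarrow> real \<Rightarrow> real \<Rightarrow> real \<Rightarrow> real \<Rightarrow> pt" where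
  "gv M a \<theta> P r = (- ((r\<^sup>2 + a\<^sup>2) / Delta M a r), 1,
      sin \<theta> * sin (P - eta M a r) * (a / Delta M a r), - (sin \<theta> * cos (P - eta M a r) * (a / Delta M a r)), 0)"

lemma gam_vd:
  assumes "r_minus M a < r" "r < r_plus M a"
    and D: "Delta M a r = (r - r_plus M a) * (r - r_minus M a)"
    and rs: "(rs has_real_derivative (r\<^sup>2 + a\<^sup>2) / Delta M a r) (at r)"
  shows "(gam M a rs T \<theta> P has_vector_derivative gv M a \<theta> P r) (at r)"
proof -
  note ed = eta_deriv[OF assms(1-3)]
  have 1: "((\<lambda>r. T - rs r) has_vector_derivative - ((r\<^sup>2 + a\<^sup>2) / Delta M a r)) (at r)"
    unfolding has_real_derivative_iff_has_vector_derivative[symmetric]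
    using rs by (auto intro!: derivative_eq_intros)
  have 2: "((\<lambda>r. sin \<theta> * cos (P - eta M a r)) has_vector_derivative sin \<theta> * sin (P - eta M a r) * (a / Delta M a r)) (at r)"
    unfolding has_real_derivative_iff_has_vector_derivative[symmetric]
    using ed by (auto intro!: derivative_eq_intros)
  have 3: "((\<lambda>r. sin \<theta> * sin (P - eta M a r)) has_vector_derivative - (sin \<theta> * cos (P - eta M a r) * (a / Delta M a r))) (at r)"
    unfolding has_real_derivative_iff_has_vector_derivative[symmetric]
    using ed by (auto intro!: derivative_eq_intros)
  show ?thesis
    unfolding gam_def[abs_def] spt_def gv_def
    by (intro has_vector_derivative_Pair has_vector_derivative_const has_vector_derivative_id 1 2 3)
qed

lemma gv_decomp:
  "gv M a \<theta> P r = (- ((r\<^sup>2 + a\<^sup>2) / Delta M a r)) *\<^sub>R et + er + (- (a / Delta M a r)) *\<^sub>R ew \<theta> (P - eta M a r)"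
  by (simp add: gv_def et_def er_def ew_def)

lemma E3x_gam:
  assumes "Delta M a r \<noteq> 0" "rho2 a r \<theta> \<noteq> 0"
  shows "E3x M a F (T - rs r) r \<theta> (P - eta M a r) = Delta M a r / rho2 a r \<theta> * DFo F (gam M a rs T \<theta> P r) (gv M a \<theta> P r)"
  unfolding gv_decomp DFo_add DFo_scale E3x_def gam_def
  using assms by (simp add: field_simps)

lemma ind_comp:
  assumes "f \<in> borel_measurable borel" "A \<in> sets borel"
  shows "(\<lambda>p. indicator A (f p) :: ennreal) \<in> borel_measurable borel"
  using measurable_compose[OF assms(1) borel_measurable_indicator[OF assms(2)]] .

lemma cont_meas:
  assumes "continuous_on UNIV f"
  shows "f \<in> borel_measurable borel"
  using borel_measurable_continuous_onI[OF assms] .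

lemma shear_meas:
  fixes \<sigma> \<eta> :: "real \<Rightarrow> real"
  assumes [measurable]: "\<sigma> \<in> borel_measurable borel" "\<eta> \<in> borel_measurable borel"
  shows "(\<lambda>p::real\<times>real\<times>real\<times>real. (fst p - \<sigma> (fst (snd p)), fst (snd p), fst (snd (snd p)), snd (snd (snd p)) - \<eta> (fst (snd p)))) \<in> borel_measurable borel"
proof -
  have c: "(\<lambda>p::real\<times>real\<times>real\<times>real. fst p) \<in> borel_measurable borel"
    "(\<lambda>p::real\<times>real\<times>real\<times>real. fst (snd p)) \<in> borel_measurable borel"
    "(\<lambda>p::real\<times>real\<times>real\<times>real. fst (snd (snd p))) \<in> borel_measurable borel"
    "(\<lambda>p::real\<times>real\<times>real\<times>real. snd (snd (snd p))) \<in> borel_measurable borel"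
    by (intro cont_meas continuous_intros)+
  have s: "(\<lambda>p::real\<times>real\<times>real\<times>real. \<sigma> (fst (snd p))) \<in> borel_measurable borel"
    "(\<lambda>p::real\<times>real\<times>real\<times>real. \<eta> (fst (snd p))) \<in> borel_measurable borel"
    by (rule mcomp, fact, intro continuous_intros)+
  show ?thesis
    by (intro borel_measurable_Pair borel_measurable_diff c s)
qed

lemma transform4:
  fixes Q :: "real \<times> real \<times> real \<times> real \<Rightarrow> ennreal" and \<sigma> \<eta> :: "real \<Rightarrow> real"
  assumes Qm: "Q \<in> borel_measurable borel" and sm: "\<sigma> \<in> borel_measurable borel" and em: "\<eta> \<in> borel_measurable borel"
    and per: "\<And>t r x y k. Q (t, r, x, y + 2*pi * of_int k) = Q (t, r, x, y)"
  shows "(\<integral>\<^sup>+p. indicator {0<..<2*pi} (snd (snd (snd p))) * Q p \<partial>lborel)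
    = (\<integral>\<^sup>+q. \<integral>\<^sup>+r. indicator {0<..<2*pi} (snd (snd q)) * Q (fst q - \<sigma> r, r, fst (snd q), snd (snd q) - \<eta> r) \<partial>lborel \<partial>lborel)"
proof -
  have i4: "(\<lambda>p::real\<times>real\<times>real\<times>real. indicator {0<..<2*pi} (snd (snd (snd p))) :: ennreal) \<in> borel_measurable borel"
    by (rule ind_comp) (intro cont_meas continuous_intros, simp)
  have m1: "(\<lambda>p. indicator {0<..<2*pi} (snd (snd (snd p))) * Q p) \<in> borel_measurable borel"
    by (intro borel_measurable_times_ennreal i4 Qm)
  have Qs: "(\<lambda>p. Q (fst p - \<sigma> (fst (snd p)), fst (snd p), fst (snd (snd p)), snd (snd (snd p)) - \<eta> (fst (snd p)))) \<in> borel_measurable borel"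
    using measurable_compose[OF shear_meas[OF sm em] Qm] .
  have m2: "(\<lambda>p. indicator {0<..<2*pi} (snd (snd (snd p))) * Q (fst p - \<sigma> (fst (snd p)), fst (snd p), fst (snd (snd p)), snd (snd (snd p)) - \<eta> (fst (snd p)))) \<in> borel_measurable borel"
    by (intro borel_measurable_times_ennreal i4 Qs)
  have "(\<integral>\<^sup>+p. indicator {0<..<2*pi} (snd (snd (snd p))) * Q p \<partial>lborel)
      = (\<integral>\<^sup>+r. \<integral>\<^sup>+q. indicator {0<..<2*pi} (snd (snd q)) * Q (fst q, r, snd q) \<partial>lborel \<partial>lborel)"
    by (subst iter4_outer[OF m1]) simp
  also have "\<dots> = (\<integral>\<^sup>+r. \<integral>\<^sup>+q. indicator {0<..<2*pi} (snd (snd q)) * Q (fst q - \<sigma> r, r, fst (snd q), snd (snd q) - \<eta> r) \<partial>lborel \<partial>lborel)"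
  proof (rule nn_integral_cong)
    fix r
    have Qr: "(\<lambda>q. Q (fst q, r, snd q)) \<in> borel_measurable borel"
      by (rule mcomp[OF Qm]) (intro continuous_intros)
    show "(\<integral>\<^sup>+q. indicator {0<..<2*pi} (snd (snd q)) * Q (fst q, r, snd q) \<partial>lborel)
      = (\<integral>\<^sup>+q. indicator {0<..<2*pi} (snd (snd q)) * Q (fst q - \<sigma> r, r, fst (snd q), snd (snd q) - \<eta> r) \<partial>lborel)"
      using cv3[OF Qr, of "\<sigma> r" "\<eta> r"] per by simp
  qed
  also have "\<dots> = (\<integral>\<^sup>+p. indicator {0<..<2*pi} (snd (snd (snd p))) * Q (fst p - \<sigma> (fst (snd p)), fst (snd p), fst (snd (snd p)), snd (snd (snd p)) - \<eta> (fst (snd p))) \<partial>lborel)"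
    by (subst iter4_outer[OF m2]) simp
  also have "\<dots> = (\<integral>\<^sup>+q. \<integral>\<^sup>+r. indicator {0<..<2*pi} (snd (snd q)) * Q (fst q - \<sigma> r, r, fst (snd q), snd (snd q) - \<eta> r) \<partial>lborel \<partial>lborel)"
    by (subst iter4_inner[OF m2]) simp
  finally show ?thesis .
qed

lemma transform4_meas:
  fixes Q :: "real \<times> real \<times> real \<times> real \<Rightarrow> ennreal" and \<sigma> \<eta> :: "real \<Rightarrow> real"
  assumes Qm: "Q \<in> borel_measurable borel" and sm: "\<sigma> \<in> borel_measurable borel" and em: "\<eta> \<in> borel_measurable borel"
  shows "(\<lambda>q. \<integral>\<^sup>+r. indicator {0<..<2*pi} (snd (snd q)) * Q (fst q - \<sigma> r, r, fst (snd q), snd (snd q) - \<eta> r) \<partial>lborel) \<in> borel_measurable borel"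
proof -
  have i4: "(\<lambda>p::real\<times>real\<times>real\<times>real. indicator {0<..<2*pi} (snd (snd (snd p))) :: ennreal) \<in> borel_measurable borel"
    by (rule ind_comp) (intro cont_meas continuous_intros, simp)
  have Qs: "(\<lambda>p. Q (fst p - \<sigma> (fst (snd p)), fst (snd p), fst (snd (snd p)), snd (snd (snd p)) - \<eta> (fst (snd p)))) \<in> borel_measurable borel"
    using measurable_compose[OF shear_meas[OF sm em] Qm] .
  have m2: "(\<lambda>p. indicator {0<..<2*pi} (snd (snd (snd p))) * Q (fst p - \<sigma> (fst (snd p)), fst (snd p), fst (snd (snd p)), snd (snd (snd p)) - \<eta> (fst (snd p)))) \<in> borel_measurable borel"
    by (intro borel_measurable_times_ennreal i4 Qs)
  have "(\<lambda>x::(real\<times>real\<times>real)\<times>real. indicator {0<..<2*pi} (snd (snd (snd (fst (fst x), snd x, snd (fst x))))) *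
       Q (fst (fst (fst x), snd x, snd (fst x)) - \<sigma> (fst (snd (fst (fst x), snd x, snd (fst x)))), fst (snd (fst (fst x), snd x, snd (fst x))),
          fst (snd (snd (fst (fst x), snd x, snd (fst x)))), snd (snd (snd (fst (fst x), snd x, snd (fst x)))) - \<eta> (fst (snd (fst (fst x), snd x, snd (fst x))))))
     \<in> borel_measurable borel"
    by (rule mcomp[OF m2]) (intro continuous_intros)
  then have "(\<lambda>x::(real\<times>real\<times>real)\<times>real. indicator {0<..<2*pi} (snd (snd (fst x))) * Q (fst (fst x) - \<sigma> (snd x), snd x, fst (snd (fst x)), snd (snd (fst x)) - \<eta> (snd x)))
     \<in> borel_measurable (lborel \<Otimes>\<^sub>M lborel)"
    by (simp add: lborel_prod)
  from lborel.borel_measurable_nn_integral_fst[OF this] show ?thesis by simp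
qed

lemma bndL:
  fixes x y d \<alpha> G \<rho> K s :: real
  assumes "x > 0" "d > 0" "d \<le> y" "0 \<le> \<alpha>" "0 < \<rho>" "\<rho> \<le> K" "0 \<le> s"
  shows "G\<^sup>2 / (x*y) powr \<alpha> * \<rho> * s \<le> (d powr (-\<alpha>) * K) * s * (G\<^sup>2 * x powr (-\<alpha>))"
proof -
  have y: "y > 0" using assms by simp
  have e: "G\<^sup>2 / (x*y) powr \<alpha> = G\<^sup>2 * x powr (-\<alpha>) * y powr (-\<alpha>)"
    using assms y by (simp add: powr_mult powr_minus divide_inverse)
  have "y powr (-\<alpha>) \<le> d powr (-\<alpha>)" using assms by (intro powr_mono2') auto
  then have "G\<^sup>2 * x powr (-\<alpha>) * y powr (-\<alpha>) * \<rho> * s \<le> G\<^sup>2 * x powr (-\<alpha>) * d powr (-\<alpha>) * K * s"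
    using assms by (intro mult_right_mono mult_mono mult_left_mono) auto
  then show ?thesis unfolding e by (simp add: mult_ac)
qed

lemma bndR:
  fixes x y d \<alpha> G \<rho> K s :: real
  assumes "x > 0" "d > 0" "d \<le> y" "0 \<le> \<alpha>" "\<alpha> < 1" "0 < \<rho>" "\<rho> \<le> K" "0 \<le> s"
  shows "(d powr (2-\<alpha>) / K) * s * (G\<^sup>2 * x powr (2-\<alpha>)) \<le> ((-(x*y)) / \<rho> * G)\<^sup>2 / (x*y) powr \<alpha> * \<rho> * s"
proof -
  have y: "y > 0" using assms by simp
  have xy: "x * y > 0" using assms y by simp
  have sq: "(x*y)\<^sup>2 = (x*y) powr 2" using xy by (simp add: powr_numeral)
  have "((-(x*y)) / \<rho> * G)\<^sup>2 / (x*y) powr \<alpha> * \<rho> * s = ((x*y) powr 2 / (x*y) powr \<alpha>) * G\<^sup>2 * s / \<rho>"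
    using assms by (simp add: power_mult_distrib power_divide sq[symmetric] field_simps power2_eq_square)
  also have "(x*y) powr 2 / (x*y) powr \<alpha> = x powr (2-\<alpha>) * y powr (2-\<alpha>)"
    using xy assms y by (simp add: powr_diff powr_mult)
  finally have e: "((-(x*y)) / \<rho> * G)\<^sup>2 / (x*y) powr \<alpha> * \<rho> * s = x powr (2-\<alpha>) * y powr (2-\<alpha>) * G\<^sup>2 * s / \<rho>" .
  have "d powr (2-\<alpha>) \<le> y powr (2-\<alpha>)" using assms by (intro powr_mono2) auto
  moreover have "1 / K \<le> 1 / \<rho>" using assms by (intro divide_left_mono) auto
  ultimately have "d powr (2-\<alpha>) * (1/K) * (x powr (2-\<alpha>) * G\<^sup>2 * s) \<le> y powr (2-\<alpha>) * (1/\<rho>) * (x powr (2-\<alpha>) * G\<^sup>2 * s)"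
    using assms by (intro mult_right_mono mult_mono) auto
  then show ?thesis unfolding e by (simp add: field_simps)
qed

definition Cst :: "real \<Rightarrow> real \<Rightarrow> real \<Rightarrow> real \<Rightarrow> real" where
  "Cst rm rt a \<alpha> =
    (let d = rt - rm; cL = d powr (-\<alpha>) * (rt\<^sup>2 + a\<^sup>2); cR = d powr (2-\<alpha>) / (rt\<^sup>2 + a\<^sup>2);
         Ka = 2*(rt-rm) powr (1-\<alpha>)/(1-\<alpha>); Kb = 4/(1-\<alpha>)^2
     in cL*Ka/rt\<^sup>2 + cL*Kb/cR)"

lemma Cst_pos:
  assumes "0 < rm" "rm < rt" "0 \<le> \<alpha>" "\<alpha> < 1"
  shows "Cst rm rt a \<alpha> > 0"
proof -
  have K: "rt\<^sup>2 + a\<^sup>2 > 0" using assms by (simp add: add_pos_nonneg)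
  have d: "rt - rm > 0" using assms by simp
  have p1: "0 < (rt-rm) powr (-\<alpha>) * (rt\<^sup>2+a\<^sup>2)" using K d by simp
  have p2: "0 < 2*(rt-rm) powr (1-\<alpha>)/(1-\<alpha>)" using d assms by simp
  have p3: "0 < (rt-rm) powr (2-\<alpha>)/(rt\<^sup>2+a\<^sup>2)" using K d by simp
  have p4: "0 < 4/(1-\<alpha>)^2" using assms by simp
  have p5: "0 < rt\<^sup>2" using assms by simp
  show ?thesis unfolding Cst_def Let_def
    by (intro add_pos_pos divide_pos_pos mult_pos_pos p1 p2 p3 p4 p5)
qed

lemma measS:
  fixes f \<psi> \<psi>b :: "real \<Rightarrow> real"
  assumes "continuous_on {rm<..rt} f" "\<psi>b \<in> borel_measurable borel" "\<And>r. rm < r \<Longrightarrow> r \<le> rt \<Longrightarrow> \<psi>b r = \<psi> r"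
  shows "(\<lambda>r. ennreal (f r) * indicator {r. rm<r \<and> r\<le>rt \<and> \<psi> r \<le> K} r) \<in> borel_measurable lborel"
proof -
  have 1: "(\<lambda>r. ennreal (f r) * indicator {rm<..rt} r) \<in> borel_measurable borel"
    by (rule meas_ind_cont) (use assms in auto)
  have 2: "(\<lambda>r. indicator {..K} (\<psi>b r) :: ennreal) \<in> borel_measurable borel"
    using measurable_compose[OF assms(2) borel_measurable_indicator[of "{..K}"]] by simp
  have "(\<lambda>r. ennreal (f r) * indicator {rm<..rt} r * indicator {..K} (\<psi>b r)) \<in> borel_measurable borel"
    by (intro borel_measurable_times_ennreal 1 2)
  moreover have "(\<lambda>r. ennreal (f r) * indicator {rm<..rt} r * indicator {..K} (\<psi>b r)) = (\<lambda>r. ennreal (f r) * indicator {r. rm<r \<and> r\<le>rt \<and> \<psi> r \<le> K} r)"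
    using assms(3) by (auto simp: indicator_def fun_eq_iff)
  ultimately show ?thesis by simp
qed

lemma core1d:
  fixes g g' \<psi> \<psi>b Dl :: "real \<Rightarrow> real" and rm rt rp d \<alpha> a \<theta> K :: real
  assumes rr: "0 < rm" "rm < rt" "rt < rp" "rp - rt = rt - rm"
    and al: "0 \<le> \<alpha>" "\<alpha> < 1"
    and th: "0 < \<theta>" "\<theta> < pi"
    and gd: "\<And>r. rm < r \<Longrightarrow> r \<le> rt \<Longrightarrow> (g has_real_derivative g' r) (at r)"
    and gc: "continuous_on {rm<..rt} g'"
    and \<psi>d: "\<And>r. rm < r \<Longrightarrow> r \<le> rt \<Longrightarrow> \<exists>y. (\<psi> has_real_derivative y) (at r) \<and> y < 0"
    and \<psi>b: "\<psi>b \<in> borel_measurable borel" "\<And>r. rm < r \<Longrightarrow> r \<le> rt \<Longrightarrow> \<psi>b r = \<psi> r"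
    and Dl: "\<And>r. Dl r = (r - rp) * (r - rm)"
  shows "(\<integral>\<^sup>+r. ennreal ((g r)\<^sup>2 / (- Dl r) powr \<alpha> * rho2 a r \<theta> * sin \<theta>) * indicator {r. rm<r \<and> r\<le>rt \<and> \<psi> r \<le> K} r \<partial>lborel)
    \<le> ennreal (Cst rm rt a \<alpha>) * (ennreal ((g rt)\<^sup>2 * rho2 a rt \<theta> * sin \<theta>) * indicator {r. rm<r \<and> r\<le>rt \<and> \<psi> r \<le> K} rt
      + (\<integral>\<^sup>+r. ennreal ((Dl r / rho2 a r \<theta> * g' r)\<^sup>2 / (- Dl r) powr \<alpha> * rho2 a r \<theta> * sin \<theta>) * indicator {r. rm<r \<and> r\<le>rt \<and> \<psi> r \<le> K} r \<partial>lborel))"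
proof -
  define S where "S = {r. rm<r \<and> r\<le>rt \<and> \<psi> r \<le> K}"
  define d where "d = rt - rm"
  define cL where "cL = d powr (-\<alpha>) * (rt\<^sup>2 + a\<^sup>2)"
  define cR where "cR = d powr (2-\<alpha>) / (rt\<^sup>2 + a\<^sup>2)"
  define Ka where "Ka = 2*(rt-rm) powr (1-\<alpha>)/(1-\<alpha>)"
  define Kb where "Kb = 4/(1-\<alpha>)^2"
  define s where "s = sin \<theta>"
  have dpos: "d > 0" using rr by (simp add: d_def)
  have spos: "s > 0" using th by (simp add: s_def sin_gt_zero)
  have rtpos: "rt > 0" using rr by simp
  have K2pos: "rt\<^sup>2 + a\<^sup>2 > 0" using rtpos by (simp add: add_pos_nonneg)
  have cLpos: "cL > 0" using dpos K2pos by (simp add: cL_def)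
  have cRpos: "cR > 0" using dpos K2pos by (simp add: cR_def)
  have Kapos: "Ka \<ge> 0" using al by (simp add: Ka_def)
  have Kbpos: "Kb \<ge> 0" by (simp add: Kb_def)
  have Cst: "Cst rm rt a \<alpha> = cL*Ka/rt\<^sup>2 + cL*Kb/cR"
    unfolding Cst_def Let_def cL_def cR_def Ka_def Kb_def d_def ..
  have rfacts: "r - rm > 0" "d \<le> rp - r" "- Dl r = (r - rm) * (rp - r)" "0 < rho2 a r \<theta>" "rho2 a r \<theta> \<le> rt\<^sup>2 + a\<^sup>2"
    if "rm < r" "r \<le> rt" for r
  proof -
    show "r - rm > 0" "d \<le> rp - r" using that rr by (auto simp: d_def)
    show "- Dl r = (r - rm) * (rp - r)" by (simp add: Dl algebra_simps)
    have "r > 0" using that rr by simp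
    then show "0 < rho2 a r \<theta>" by (simp add: rho2_def add_pos_nonneg)
    have "(cos \<theta>)\<^sup>2 \<le> 1" by (simp add: abs_square_le_1)
    then have "a\<^sup>2 * (cos \<theta>)\<^sup>2 \<le> a\<^sup>2" by (simp add: mult_left_le)
    moreover have "r\<^sup>2 \<le> rt\<^sup>2" using \<open>r > 0\<close> that by (intro power_mono) auto
    ultimately show "rho2 a r \<theta> \<le> rt\<^sup>2 + a\<^sup>2" by (simp add: rho2_def)
  qed
  have gcont: "continuous_on {rm<..rt} g"
  proof -
    have "\<forall>x\<in>{rm<..rt}. isCont g x" using gd DERIV_isCont by force
    then show ?thesis by (simp add: continuous_at_imp_continuous_on)
  qed
  have pc: "continuous_on {rm<..rt} (\<lambda>r. (r - rm) powr p)" for p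
    by (intro continuous_intros) auto
  have mA: "(\<lambda>r. ennreal ((g r)\<^sup>2 * (r-rm) powr (-\<alpha>)) * indicator S r) \<in> borel_measurable lborel"
    unfolding S_def by (rule measS[OF _ \<psi>b]) (intro continuous_intros gcont pc)
  have mB: "(\<lambda>r. ennreal ((g' r)\<^sup>2 * (r-rm) powr (2-\<alpha>)) * indicator S r) \<in> borel_measurable lborel"
    unfolding S_def by (rule measS[OF _ \<psi>b]) (intro continuous_intros gc pc)
  define I where "I = (\<integral>\<^sup>+r. ennreal ((g' r)\<^sup>2 * (r-rm) powr (2-\<alpha>)) * indicator S r \<partial>lborel)"
  define LI where "LI = (\<integral>\<^sup>+r. ennreal ((g r)\<^sup>2 * (r-rm) powr (-\<alpha>)) * indicator S r \<partial>lborel)"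
  have step1: "(\<integral>\<^sup>+r. ennreal ((g r)\<^sup>2 / (- Dl r) powr \<alpha> * rho2 a r \<theta> * sin \<theta>) * indicator S r \<partial>lborel)
      \<le> ennreal (cL * s) * LI"
  proof -
    have "(\<integral>\<^sup>+r. ennreal ((g r)\<^sup>2 / (- Dl r) powr \<alpha> * rho2 a r \<theta> * sin \<theta>) * indicator S r \<partial>lborel)
      \<le> (\<integral>\<^sup>+r. ennreal (cL * s) * (ennreal ((g r)\<^sup>2 * (r-rm) powr (-\<alpha>)) * indicator S r) \<partial>lborel)"
    proof (rule nn_integral_mono)
      fix r
      show "ennreal ((g r)\<^sup>2 / (- Dl r) powr \<alpha> * rho2 a r \<theta> * sin \<theta>) * indicator S r
          \<le> ennreal (cL * s) * (ennreal ((g r)\<^sup>2 * (r-rm) powr (-\<alpha>)) * indicator S r)"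
      proof (cases "r \<in> S")
        case True
        then have r: "rm < r" "r \<le> rt" by (auto simp: S_def)
        note rf = rfacts[OF r]
        have "(g r)\<^sup>2 / (- Dl r) powr \<alpha> * rho2 a r \<theta> * sin \<theta> \<le> cL * s * ((g r)\<^sup>2 * (r-rm) powr (-\<alpha>))"
          unfolding rf(3) cL_def s_def
          by (rule bndL[OF rf(1) dpos rf(2) al(1) rf(4) rf(5)]) (use spos in \<open>simp add: s_def\<close>)
        then have "ennreal ((g r)\<^sup>2 / (- Dl r) powr \<alpha> * rho2 a r \<theta> * sin \<theta>) \<le> ennreal (cL * s) * ennreal ((g r)\<^sup>2 * (r-rm) powr (-\<alpha>))"
          using cLpos spos by (simp add: ennreal_mult[symmetric] ennreal_leI)
        then show ?thesis using True by simp
      qed simp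
    qed
    also have "\<dots> = ennreal (cL * s) * LI"
      unfolding LI_def by (rule nn_integral_cmult[OF mA])
    finally show ?thesis .
  qed
  have step2: "LI \<le> ennreal (Ka * (g rt)\<^sup>2) * indicator S rt + ennreal Kb * I"
    unfolding LI_def I_def S_def Ka_def Kb_def
    using hardy_set[OF rr(2) al gd gc \<psi>d, of K] by (simp add: mult.assoc)
  have step3: "ennreal (cR * s) * I \<le> (\<integral>\<^sup>+r. ennreal ((Dl r / rho2 a r \<theta> * g' r)\<^sup>2 / (- Dl r) powr \<alpha> * rho2 a r \<theta> * sin \<theta>) * indicator S r \<partial>lborel)"
  proof -
    have "ennreal (cR * s) * I = (\<integral>\<^sup>+r. ennreal (cR * s) * (ennreal ((g' r)\<^sup>2 * (r-rm) powr (2-\<alpha>)) * indicator S r) \<partial>lborel)"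
      unfolding I_def by (rule nn_integral_cmult[OF mB, symmetric])
    also have "\<dots> \<le> (\<integral>\<^sup>+r. ennreal ((Dl r / rho2 a r \<theta> * g' r)\<^sup>2 / (- Dl r) powr \<alpha> * rho2 a r \<theta> * sin \<theta>) * indicator S r \<partial>lborel)"
    proof (rule nn_integral_mono)
      fix r
      show "ennreal (cR * s) * (ennreal ((g' r)\<^sup>2 * (r-rm) powr (2-\<alpha>)) * indicator S r)
         \<le> ennreal ((Dl r / rho2 a r \<theta> * g' r)\<^sup>2 / (- Dl r) powr \<alpha> * rho2 a r \<theta> * sin \<theta>) * indicator S r"
      proof (cases "r \<in> S")
        case True
        then have r: "rm < r" "r \<le> rt" by (auto simp: S_def)
        note rf = rfacts[OF r]
        have DD: "Dl r = - ((r - rm) * (rp - r))" using rf(3) by simp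
        have "cR * s * ((g' r)\<^sup>2 * (r-rm) powr (2-\<alpha>)) \<le> (Dl r / rho2 a r \<theta> * g' r)\<^sup>2 / (- Dl r) powr \<alpha> * rho2 a r \<theta> * sin \<theta>"
          unfolding DD minus_minus cR_def s_def
          by (rule bndR[OF rf(1) dpos rf(2) al(1) al(2) rf(4) rf(5)]) (use spos in \<open>simp add: s_def\<close>)
        then have "ennreal (cR * s) * ennreal ((g' r)\<^sup>2 * (r-rm) powr (2-\<alpha>)) \<le> ennreal ((Dl r / rho2 a r \<theta> * g' r)\<^sup>2 / (- Dl r) powr \<alpha> * rho2 a r \<theta> * sin \<theta>)"
          using cRpos spos by (simp add: ennreal_mult[symmetric] ennreal_leI)
        then show ?thesis using True by simp
      qed simp
    qed
    finally show ?thesis .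
  qed
  have Cpos0: "Cst rm rt a \<alpha> > 0" by (rule Cst_pos[OF rr(1,2) al])
  have rho_rt: "rho2 a rt \<theta> \<ge> rt\<^sup>2" by (simp add: rho2_def)
  have rho_nn: "rho2 a rt \<theta> \<ge> 0" using rho_rt by (meson order_trans zero_le_power2)
  have t1: "ennreal (cL * s) * (ennreal (Ka * (g rt)\<^sup>2) * indicator S rt)
      \<le> ennreal (Cst rm rt a \<alpha>) * (ennreal ((g rt)\<^sup>2 * rho2 a rt \<theta> * sin \<theta>) * indicator S rt)"
  proof -
    have "cL * s * (Ka * (g rt)\<^sup>2) \<le> (cL*Ka/rt\<^sup>2) * (rt\<^sup>2 * ((g rt)\<^sup>2 * s))"
      using rtpos by (simp add: field_simps)
    also have "\<dots> \<le> Cst rm rt a \<alpha> * (rho2 a rt \<theta> * ((g rt)\<^sup>2 * s))"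
      unfolding Cst using rho_rt rho_nn cLpos cRpos Kapos Kbpos spos rtpos
      by (intro mult_mono) (auto intro!: mult_right_mono add_nonneg_nonneg)
    finally have "cL * s * (Ka * (g rt)\<^sup>2) \<le> Cst rm rt a \<alpha> * ((g rt)\<^sup>2 * rho2 a rt \<theta> * sin \<theta>)"
      by (simp add: s_def mult_ac)
    then have le: "ennreal (cL * s * (Ka * (g rt)\<^sup>2)) \<le> ennreal (Cst rm rt a \<alpha> * ((g rt)\<^sup>2 * rho2 a rt \<theta> * sin \<theta>))"
      by (rule ennreal_leI)
    have Cpos: "Cst rm rt a \<alpha> > 0" by (rule Cst_pos[OF rr(1,2) al])
    have e1: "ennreal (cL * s) * ennreal (Ka * (g rt)\<^sup>2) = ennreal (cL * s * (Ka * (g rt)\<^sup>2))"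
      using cLpos spos Kapos by (simp add: ennreal_mult)
    have e2: "ennreal (Cst rm rt a \<alpha>) * ennreal ((g rt)\<^sup>2 * rho2 a rt \<theta> * sin \<theta>) = ennreal (Cst rm rt a \<alpha> * ((g rt)\<^sup>2 * rho2 a rt \<theta> * sin \<theta>))"
      using Cpos rho_nn spos by (simp add: ennreal_mult s_def)
    have "ennreal (cL * s) * ennreal (Ka * (g rt)\<^sup>2) \<le> ennreal (Cst rm rt a \<alpha>) * ennreal ((g rt)\<^sup>2 * rho2 a rt \<theta> * sin \<theta>)"
      unfolding e1 e2 by (rule le)
    then show ?thesis by (simp add: mult.assoc[symmetric] mult_right_mono)
  qed
  have t2: "ennreal (cL * s) * (ennreal Kb * I) \<le> ennreal (Cst rm rt a \<alpha>) * (ennreal (cR * s) * I)"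
  proof -
    have "cL * s * Kb = (cL * Kb / cR) * (cR * s)" using cRpos by (simp add: field_simps)
    also have "\<dots> \<le> Cst rm rt a \<alpha> * (cR * s)"
      unfolding Cst using cLpos cRpos Kapos Kbpos spos rtpos
      by (intro mult_right_mono) auto
    finally have "ennreal (cL * s * Kb) \<le> ennreal (Cst rm rt a \<alpha> * (cR * s))" by (rule ennreal_leI)
    moreover have "ennreal (cL * s) * ennreal Kb = ennreal (cL * s * Kb)"
      using cLpos spos Kbpos by (simp add: ennreal_mult)
    moreover have "ennreal (Cst rm rt a \<alpha>) * ennreal (cR * s) = ennreal (Cst rm rt a \<alpha> * (cR * s))"
      using cRpos spos Cpos0 by (simp add: ennreal_mult)
    ultimately have "ennreal (cL * s) * ennreal Kb \<le> ennreal (Cst rm rt a \<alpha>) * ennreal (cR * s)"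
      by simp
    then show ?thesis by (simp add: mult.assoc[symmetric] mult_right_mono)
  qed
  have "(\<integral>\<^sup>+r. ennreal ((g r)\<^sup>2 / (- Dl r) powr \<alpha> * rho2 a r \<theta> * sin \<theta>) * indicator S r \<partial>lborel)
      \<le> ennreal (cL * s) * (ennreal (Ka * (g rt)\<^sup>2) * indicator S rt + ennreal Kb * I)"
    using step1 step2 by (meson order_trans mult_left_mono zero_le)
  also have "\<dots> = ennreal (cL * s) * (ennreal (Ka * (g rt)\<^sup>2) * indicator S rt) + ennreal (cL * s) * (ennreal Kb * I)"
    by (simp add: distrib_left)
  also have "\<dots> \<le> ennreal (Cst rm rt a \<alpha>) * (ennreal ((g rt)\<^sup>2 * rho2 a rt \<theta> * sin \<theta>) * indicator S rt)
      + ennreal (Cst rm rt a \<alpha>) * (ennreal (cR * s) * I)"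
    by (intro add_mono t1 t2)
  also have "\<dots> \<le> ennreal (Cst rm rt a \<alpha>) * (ennreal ((g rt)\<^sup>2 * rho2 a rt \<theta> * sin \<theta>) * indicator S rt
      + (\<integral>\<^sup>+r. ennreal ((Dl r / rho2 a r \<theta> * g' r)\<^sup>2 / (- Dl r) powr \<alpha> * rho2 a r \<theta> * sin \<theta>) * indicator S r \<partial>lborel))"
    unfolding distrib_left by (intro add_mono order_refl mult_left_mono step3) auto
  finally show ?thesis unfolding S_def .
qed

definition sig :: "real \<Rightarrow> real \<Rightarrow> (real \<Rightarrow> real) \<Rightarrow> real \<Rightarrow> real" where
  "sig M a rs r = (if r_minus M a < r \<and> r < r_plus M a then rs r else 0)"

definition QQ :: "real \<Rightarrow> real \<Rightarrow> real \<Rightarrow> (real \<Rightarrow> real) \<Rightarrow> (real \<Rightarrow> real \<Rightarrow> real \<Rightarrow> real \<Rightarrow> real) \<Rightarrow> real \<times> real \<times> real \<times> real \<Rightarrow> ennreal" where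
  "QQ M a u1 rs h p = indicator {r_minus M a<..M} (fst (snd p)) * indicator {0<..<pi} (fst (snd (snd p)))
     * indicator {..u1} (sig M a rs (fst (snd p)) - fst p - fst (snd p) + r_minus M a)
     * ennreal (h (fst p) (fst (snd p)) (fst (snd (snd p))) (snd (snd (snd p))))"

definition QS :: "real \<Rightarrow> real \<Rightarrow> real \<Rightarrow> (real \<Rightarrow> real) \<Rightarrow> (real \<Rightarrow> real \<Rightarrow> real \<Rightarrow> real) \<Rightarrow> real \<times> real \<times> real \<Rightarrow> ennreal" where
  "QS M a u1 rs h q = indicator {0<..<pi} (fst (snd q)) * indicator {..u1} (sig M a rs M - fst q - M + r_minus M a)
     * ennreal (h (fst q) (fst (snd q)) (snd (snd q)))"

definition hL :: "real \<Rightarrow> real \<Rightarrow> real \<Rightarrow> (pt \<Rightarrow> real) \<Rightarrow> real \<Rightarrow> real \<Rightarrow> real \<Rightarrow> real \<Rightarrow> real" where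
  "hL M a \<alpha> F t r \<theta> \<phi> = (F (spt t r \<theta> \<phi>))\<^sup>2 / (- Delta M a r) powr \<alpha> * rho2 a r \<theta> * sin \<theta>"

definition hR :: "real \<Rightarrow> real \<Rightarrow> real \<Rightarrow> (pt \<Rightarrow> real) \<Rightarrow> real \<Rightarrow> real \<Rightarrow> real \<Rightarrow> real \<Rightarrow> real" where
  "hR M a \<alpha> F t r \<theta> \<phi> = (E3x M a F t r \<theta> \<phi>)\<^sup>2 / (- Delta M a r) powr \<alpha> * rho2 a r \<theta> * sin \<theta>"

definition hS :: "real \<Rightarrow> real \<Rightarrow> (pt \<Rightarrow> real) \<Rightarrow> real \<Rightarrow> real \<Rightarrow> real \<Rightarrow> real" where
  "hS M a F t \<theta> \<phi> = (F (spt t M \<theta> \<phi>))\<^sup>2 * rho2 a M \<theta> * sin \<theta>"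

lemma sin_per: "sin (y + 2 * pi * of_int k) = sin y"
  by (simp add: sin_add)
lemma cos_per: "cos (y + 2 * pi * of_int k) = cos y"
  by (simp add: cos_add)

lemma spt_per: "spt t r \<theta> (\<phi> + 2 * pi * of_int k) = spt t r \<theta> \<phi>"
  by (simp add: spt_def sin_per cos_per)
lemma ew_per: "ew \<theta> (\<phi> + 2 * pi * of_int k) = ew \<theta> \<phi>"
  by (simp add: ew_def sin_per cos_per)

lemma QQ_per:
  assumes "\<And>t r x y k. h t r x (y + 2 * pi * of_int k) = h t r x y"
  shows "QQ M a u1 rs h (t, r, x, y + 2 * pi * of_int k) = QQ M a u1 rs h (t, r, x, y)"
  by (simp add: QQ_def assms)

lemma QS_per:
  assumes "\<And>t x y k. h t x (y + 2 * pi * of_int k) = h t x y"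
  shows "QS M a u1 rs h (t, x, y + 2 * pi * of_int k) = QS M a u1 rs h (t, x, y)"
  by (simp add: QS_def assms)

lemma hL_per: "hL M a \<alpha> F t r x (y + 2 * pi * of_int k) = hL M a \<alpha> F t r x y"
  by (simp add: hL_def spt_per)
lemma hR_per: "hR M a \<alpha> F t r x (y + 2 * pi * of_int k) = hR M a \<alpha> F t r x y"
  by (simp add: hR_def E3x_def spt_per ew_per)
lemma hS_per: "hS M a F t x (y + 2 * pi * of_int k) = hS M a F t x y"
  by (simp add: hS_def spt_per)

context
  fixes M a \<alpha> u1 :: real and rstar :: "real \<Rightarrow> real" and F :: "pt \<Rightarrow> real" and U :: "pt set"
  assumes Mpos: "M > 0" "0 < \<bar>a\<bar>" "\<bar>a\<bar> < M" and al: "0 \<le> \<alpha>" "\<alpha> < 1"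
    and rs: "\<forall>r. r_minus M a < r \<and> r < r_plus M a \<longrightarrow> (rstar has_real_derivative (r\<^sup>2 + a\<^sup>2) / Delta M a r) (at r)"
    and U: "kerr_interior M a \<subseteq> U" "smooth_on U F"
begin

lemma cfacts: "0 < r_minus M a" "r_minus M a < M" "M < r_plus M a" "r_plus M a - M = M - r_minus M a"
  "\<And>r. Delta M a r = (r - r_plus M a) * (r - r_minus M a)"
  using kerr_consts[OF Mpos] by auto

lemma rs_cont: "continuous_on {r_minus M a<..<r_plus M a} rstar"
proof -
  have "\<forall>x\<in>{r_minus M a<..<r_plus M a}. isCont rstar x" using rs DERIV_isCont by force
  then show ?thesis by (simp add: continuous_at_imp_continuous_on)
qed

lemma sig_meas: "sig M a rstar \<in> borel_measurable borel"
proof -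
  have "(\<lambda>r. indicator {r_minus M a<..<r_plus M a} r *\<^sub>R rstar r) \<in> borel_measurable borel"
    by (rule borel_measurable_continuous_on_indicator[OF _ rs_cont]) simp
  moreover have "(\<lambda>r. indicator {r_minus M a<..<r_plus M a} r *\<^sub>R rstar r) = sig M a rstar"
    by (auto simp: sig_def indicator_def fun_eq_iff)
  ultimately show ?thesis by simp
qed

lemma eta_meas: "eta M a \<in> borel_measurable borel"
proof -
  have "(\<lambda>r. a / (r_plus M a - r_minus M a) * (ln (r_plus M a - r) - ln (r - r_minus M a))) \<in> borel_measurable borel"
    by measurable
  then show ?thesis by (simp add: eta_def[abs_def])
qed

lemma spt_U: "r_minus M a < r \<Longrightarrow> r < r_plus M a \<Longrightarrow> spt t r \<theta> \<phi> \<in> U"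
  using spt_kerr U(1) by blast

definition B4 :: "(real \<times> real \<times> real \<times> real) set" where
  "B4 = {p. r_minus M a < fst (snd p) \<and> fst (snd p) < r_plus M a}"

lemma B4_open: "open B4"
proof -
  have "B4 = (\<lambda>p. fst (snd p)) -` {r_minus M a<..<r_plus M a}" by (auto simp: B4_def)
  moreover have "open ((\<lambda>p::real\<times>real\<times>real\<times>real. fst (snd p)) -` {r_minus M a<..<r_plus M a})"
    by (intro open_vimage continuous_intros open_greaterThanLessThan)
  ultimately show ?thesis by simp
qed

lemma spt4_cont: "continuous_on B4 (\<lambda>p. spt (fst p) (fst (snd p)) (fst (snd (snd p))) (snd (snd (snd p))))"
  unfolding spt_def by (intro continuous_intros)

lemma spt4_U: "(\<lambda>p. spt (fst p) (fst (snd p)) (fst (snd (snd p))) (snd (snd (snd p)))) ` B4 \<subseteq> U"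
  using spt_U by (auto simp: B4_def)

lemma F4_cont: "continuous_on B4 (\<lambda>p. F (spt (fst p) (fst (snd p)) (fst (snd (snd p))) (snd (snd (snd p)))))"
  by (rule continuous_on_compose2[OF smooth_cont[OF U(2)] spt4_cont spt4_U])

lemma Delta_neg: "r_minus M a < r \<Longrightarrow> r < r_plus M a \<Longrightarrow> Delta M a r < 0"
  using cfacts(5)[of r] by (simp add: mult_neg_pos)

lemma Delta_ne: "r_minus M a < r \<Longrightarrow> r < r_plus M a \<Longrightarrow> Delta M a r \<noteq> 0"
  using Delta_neg by force

lemma Delta_cont: "continuous_on S f \<Longrightarrow> continuous_on S (\<lambda>x. Delta M a (f x))"
  unfolding Delta_def by (intro continuous_intros)

lemma hL_cont: "continuous_on B4 (\<lambda>p. hL M a \<alpha> F (fst p) (fst (snd p)) (fst (snd (snd p))) (snd (snd (snd p))))"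
  unfolding hL_def rho2_def
  apply (intro continuous_intros F4_cont Delta_cont)
  apply (auto simp: B4_def Delta_ne)
  done

lemma rho_ne: "r_minus M a < r \<Longrightarrow> r\<^sup>2 + a\<^sup>2 * (cos \<theta>)\<^sup>2 \<noteq> 0"
proof -
  assume "r_minus M a < r"
  then have "r > 0" using cfacts(1) by simp
  then have "r\<^sup>2 + a\<^sup>2 * (cos \<theta>)\<^sup>2 > 0" by (simp add: add_pos_nonneg)
  then show ?thesis by simp
qed

lemma hR_cont: "continuous_on B4 (\<lambda>p. hR M a \<alpha> F (fst p) (fst (snd p)) (fst (snd (snd p))) (snd (snd (snd p))))"
proof -
  have ewc: "continuous_on B4 (\<lambda>p. ew (fst (snd (snd p))) (snd (snd (snd p))))"
    unfolding ew_def by (intro continuous_intros)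
  note D = DFo_cont[OF U(2) spt4_cont _ spt4_U]
  show ?thesis
    unfolding hR_def rho2_def E3x_def
    apply (intro continuous_intros Delta_cont D ewc)
    apply (auto simp: B4_def Delta_ne rho_ne)
    done
qed

lemma hS_cont: "continuous_on UNIV (\<lambda>q. hS M a F (fst q) (fst (snd q)) (snd (snd q)))"
proof -
  have c: "continuous_on UNIV (\<lambda>q::real\<times>real\<times>real. spt (fst q) M (fst (snd q)) (snd (snd q)))"
    unfolding spt_def by (intro continuous_intros)
  have i: "(\<lambda>q::real\<times>real\<times>real. spt (fst q) M (fst (snd q)) (snd (snd q))) ` UNIV \<subseteq> U"
    using spt_U cfacts by auto
  show ?thesis unfolding hS_def rho2_def
    by (intro continuous_intros continuous_on_compose2[OF smooth_cont[OF U(2)] c i])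
qed

lemma QQ_meas:
  assumes hc: "continuous_on B4 (\<lambda>p. h (fst p) (fst (snd p)) (fst (snd (snd p))) (snd (snd (snd p))))"
  shows "QQ M a u1 rstar h \<in> borel_measurable borel"
proof -
  define hh where "hh p = h (fst p) (fst (snd p)) (fst (snd (snd p))) (snd (snd (snd p)))" for p
  have hm: "(\<lambda>p. indicator B4 p *\<^sub>R hh p) \<in> borel_measurable borel"
    by (rule borel_measurable_continuous_on_indicator) (use B4_open hc in \<open>auto simp: hh_def\<close>)
  have hm2: "(\<lambda>p. ennreal (indicator B4 p *\<^sub>R hh p)) \<in> borel_measurable borel"
    using hm by measurable
  have f2: "(\<lambda>p::real\<times>real\<times>real\<times>real. fst (snd p)) \<in> borel_measurable borel"
    "(\<lambda>p::real\<times>real\<times>real\<times>real. fst (snd (snd p))) \<in> borel_measurable borel"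
    "(\<lambda>p::real\<times>real\<times>real\<times>real. fst p) \<in> borel_measurable borel"
    by (intro cont_meas continuous_intros)+
  have f3: "(\<lambda>p::real\<times>real\<times>real\<times>real. sig M a rstar (fst (snd p))) \<in> borel_measurable borel"
    by (rule mcomp[OF sig_meas]) (intro continuous_intros)
  have f4: "(\<lambda>p::real\<times>real\<times>real\<times>real. sig M a rstar (fst (snd p)) - fst p - fst (snd p) + r_minus M a) \<in> borel_measurable borel"
    by (intro borel_measurable_add borel_measurable_diff f2 f3 borel_measurable_const)
  have m: "(\<lambda>p. indicator {r_minus M a<..M} (fst (snd p)) * indicator {0<..<pi} (fst (snd (snd p)))
     * indicator {..u1} (sig M a rstar (fst (snd p)) - fst p - fst (snd p) + r_minus M a)
     * ennreal (indicator B4 p *\<^sub>R hh p) :: ennreal) \<in> borel_measurable borel"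
    by (intro borel_measurable_times_ennreal ind_comp f2 f4 hm2) auto
  have "QQ M a u1 rstar h = (\<lambda>p. indicator {r_minus M a<..M} (fst (snd p)) * indicator {0<..<pi} (fst (snd (snd p)))
     * indicator {..u1} (sig M a rstar (fst (snd p)) - fst p - fst (snd p) + r_minus M a)
     * ennreal (indicator B4 p *\<^sub>R hh p))"
  proof
    fix p
    show "QQ M a u1 rstar h p = indicator {r_minus M a<..M} (fst (snd p)) * indicator {0<..<pi} (fst (snd (snd p)))
     * indicator {..u1} (sig M a rstar (fst (snd p)) - fst p - fst (snd p) + r_minus M a)
     * ennreal (indicator B4 p *\<^sub>R hh p)"
      using cfacts by (cases "fst (snd p) \<in> {r_minus M a<..M}") (auto simp: QQ_def hh_def B4_def)
  qed
  with m show ?thesis by simp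
qed

lemma QS_meas:
  assumes hc: "continuous_on UNIV (\<lambda>q. h (fst q) (fst (snd q)) (snd (snd q)))"
  shows "QS M a u1 rstar h \<in> borel_measurable borel"
proof -
  have hm2: "(\<lambda>q. ennreal (h (fst q) (fst (snd q)) (snd (snd q)))) \<in> borel_measurable borel"
    using cont_meas[OF hc] by measurable
  have f: "(\<lambda>q::real\<times>real\<times>real. fst (snd q)) \<in> borel_measurable borel"
    "(\<lambda>q::real\<times>real\<times>real. sig M a rstar M - fst q - M + r_minus M a) \<in> borel_measurable borel"
    by (intro cont_meas continuous_intros)+
  show ?thesis unfolding QS_def[abs_def]
    by (intro borel_measurable_times_ennreal ind_comp f hm2) auto
qed

lemma V1: "vol_int M a rstar M u1 (\<lambda>t r \<theta> \<phi>. (BL F t r \<theta> \<phi>)\<^sup>2 / (- Delta M a r) powr \<alpha>)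
  = (\<integral>\<^sup>+p. indicator {0<..<2*pi} (snd (snd (snd p))) * QQ M a u1 rstar (hL M a \<alpha> F) p \<partial>lborel)"
  unfolding vol_int_def
proof (rule nn_integral_cong)
  fix p :: "real \<times> real \<times> real \<times> real"
  obtain t r \<theta> \<phi> where p: "p = (t, r, \<theta>, \<phi>)" by (metis prod.exhaust)
  show "(case p of (t, r, \<theta>, \<phi>) \<Rightarrow> if r_minus M a < r \<and> r \<le> M \<and> 0 < \<theta> \<and> \<theta> < pi \<and> 0 < \<phi> \<and> \<phi> < 2 * pi \<and> f_minus M a rstar t r \<le> u1
            then ennreal ((BL F t r \<theta> \<phi>)\<^sup>2 / (- Delta M a r) powr \<alpha> * rho2 a r \<theta> * sin \<theta>) else 0)
     = indicator {0<..<2*pi} (snd (snd (snd p))) * QQ M a u1 rstar (hL M a \<alpha> F) p"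
    using cfacts unfolding p
    by (auto simp: indicator_def f_minus_def sig_def hL_def BL_spt QQ_def)
qed

lemma V2: "vol_int M a rstar M u1 (\<lambda>t r \<theta> \<phi>. (e3 M a F t r \<theta> \<phi>)\<^sup>2 / (- Delta M a r) powr \<alpha>)
  = (\<integral>\<^sup>+p. indicator {0<..<2*pi} (snd (snd (snd p))) * QQ M a u1 rstar (hR M a \<alpha> F) p \<partial>lborel)"
  unfolding vol_int_def
proof (rule nn_integral_cong)
  fix p :: "real \<times> real \<times> real \<times> real"
  obtain t r \<theta> \<phi> where p: "p = (t, r, \<theta>, \<phi>)" by (metis prod.exhaust)
  have e: "e3 M a F t r \<theta> \<phi> = E3x M a F t r \<theta> \<phi>" if "r_minus M a < r" "r \<le> M"
    using e3_eq[OF U(2) spt_U] that cfacts by force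
  show "(case p of (t, r, \<theta>, \<phi>) \<Rightarrow> if r_minus M a < r \<and> r \<le> M \<and> 0 < \<theta> \<and> \<theta> < pi \<and> 0 < \<phi> \<and> \<phi> < 2 * pi \<and> f_minus M a rstar t r \<le> u1
            then ennreal ((e3 M a F t r \<theta> \<phi>)\<^sup>2 / (- Delta M a r) powr \<alpha> * rho2 a r \<theta> * sin \<theta>) else 0)
     = indicator {0<..<2*pi} (snd (snd (snd p))) * QQ M a u1 rstar (hR M a \<alpha> F) p"
    using cfacts e unfolding p
    by (auto simp: indicator_def f_minus_def sig_def hR_def QQ_def)
qed

lemma S1: "surf_int M a rstar M u1 (\<lambda>t r \<theta> \<phi>. (BL F t r \<theta> \<phi>)\<^sup>2)
  = (\<integral>\<^sup>+q. indicator {0<..<2*pi} (snd (snd q)) * QS M a u1 rstar (hS M a F) q \<partial>lborel)"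
  unfolding surf_int_def
proof (rule nn_integral_cong)
  fix q :: "real \<times> real \<times> real"
  obtain t \<theta> \<phi> where q: "q = (t, \<theta>, \<phi>)" by (metis prod.exhaust)
  show "(case q of (t, \<theta>, \<phi>) \<Rightarrow> if 0 < \<theta> \<and> \<theta> < pi \<and> 0 < \<phi> \<and> \<phi> < 2 * pi \<and> f_minus M a rstar t M \<le> u1
            then ennreal ((BL F t M \<theta> \<phi>)\<^sup>2 * rho2 a M \<theta> * sin \<theta>) else 0)
     = indicator {0<..<2*pi} (snd (snd q)) * QS M a u1 rstar (hS M a F) q"
    using cfacts unfolding q
    by (auto simp: indicator_def f_minus_def sig_def hS_def BL_spt QS_def)
qed

lemma PW:
  fixes q :: "real \<times> real \<times> real"
  shows "(\<integral>\<^sup>+r. indicator {0<..<2*pi} (snd (snd q)) * QQ M a u1 rstar (hL M a \<alpha> F) (fst q - sig M a rstar r, r, fst (snd q), snd (snd q) - eta M a r) \<partial>lborel)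
    \<le> ennreal (Cst (r_minus M a) M a \<alpha>) * (indicator {0<..<2*pi} (snd (snd q)) * QS M a u1 rstar (hS M a F) (fst q - sig M a rstar M, fst (snd q), snd (snd q) - eta M a M)
      + (\<integral>\<^sup>+r. indicator {0<..<2*pi} (snd (snd q)) * QQ M a u1 rstar (hR M a \<alpha> F) (fst q - sig M a rstar r, r, fst (snd q), snd (snd q) - eta M a r) \<partial>lborel))"
proof -
  obtain T \<theta> P where q: "q = (T, \<theta>, P)" by (metis prod.exhaust)
  let ?rm = "r_minus M a" and ?rp = "r_plus M a"
  show ?thesis
  proof (cases "0 < P \<and> P < 2*pi \<and> 0 < \<theta> \<and> \<theta> < pi")
    case False
    then have "(\<integral>\<^sup>+r. indicator {0<..<2*pi} (snd (snd q)) * QQ M a u1 rstar (hL M a \<alpha> F) (fst q - sig M a rstar r, r, fst (snd q), snd (snd q) - eta M a r) \<partial>lborel) = 0"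
      unfolding q by (auto simp: QQ_def indicator_def)
    then show ?thesis by simp
  next
    case True
    then have P: "0 < P" "P < 2*pi" and th: "0 < \<theta>" "\<theta> < pi" by auto
    define g where "g r = F (gam M a rstar T \<theta> P r)" for r
    define g' where "g' r = DFo F (gam M a rstar T \<theta> P r) (gv M a \<theta> P r)" for r
    define \<psi> where "\<psi> r = 2 * rstar r - r" for r
    define \<psi>b where "\<psi>b r = 2 * sig M a rstar r - r" for r
    define K where "K = u1 + T - ?rm"
    define S where "S = {r. ?rm < r \<and> r \<le> M \<and> \<psi> r \<le> K}"
    have inr: "?rm < r \<Longrightarrow> r \<le> M \<Longrightarrow> r < ?rp" for r using cfacts by simp
    have sigr: "?rm < r \<Longrightarrow> r \<le> M \<Longrightarrow> sig M a rstar r = rstar r" for r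
      using inr by (simp add: sig_def)
    have condS: "(sig M a rstar r - (T - sig M a rstar r) - r + ?rm \<le> u1) = (\<psi> r \<le> K)" if "?rm < r" "r \<le> M" for r
      using sigr[OF that] by (auto simp: \<psi>_def K_def)
    have eL: "(\<integral>\<^sup>+r. indicator {0<..<2*pi} (snd (snd q)) * QQ M a u1 rstar (hL M a \<alpha> F) (fst q - sig M a rstar r, r, fst (snd q), snd (snd q) - eta M a r) \<partial>lborel)
      = (\<integral>\<^sup>+r. ennreal ((g r)\<^sup>2 / (- Delta M a r) powr \<alpha> * rho2 a r \<theta> * sin \<theta>) * indicator S r \<partial>lborel)"
    proof (rule nn_integral_cong)
      fix r
      show "indicator {0<..<2*pi} (snd (snd q)) * QQ M a u1 rstar (hL M a \<alpha> F) (fst q - sig M a rstar r, r, fst (snd q), snd (snd q) - eta M a r)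
        = ennreal ((g r)\<^sup>2 / (- Delta M a r) powr \<alpha> * rho2 a r \<theta> * sin \<theta>) * indicator S r"
      proof (cases "?rm < r \<and> r \<le> M")
        case True
        then show ?thesis using P th condS[of r] sigr[of r]
          by (auto simp: q QQ_def hL_def g_def gam_def S_def indicator_def)
      qed (auto simp: q QQ_def S_def)
    qed
    have eR: "(\<integral>\<^sup>+r. indicator {0<..<2*pi} (snd (snd q)) * QQ M a u1 rstar (hR M a \<alpha> F) (fst q - sig M a rstar r, r, fst (snd q), snd (snd q) - eta M a r) \<partial>lborel)
      = (\<integral>\<^sup>+r. ennreal ((Delta M a r / rho2 a r \<theta> * g' r)\<^sup>2 / (- Delta M a r) powr \<alpha> * rho2 a r \<theta> * sin \<theta>) * indicator S r \<partial>lborel)"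
    proof (rule nn_integral_cong)
      fix r
      show "indicator {0<..<2*pi} (snd (snd q)) * QQ M a u1 rstar (hR M a \<alpha> F) (fst q - sig M a rstar r, r, fst (snd q), snd (snd q) - eta M a r)
        = ennreal ((Delta M a r / rho2 a r \<theta> * g' r)\<^sup>2 / (- Delta M a r) powr \<alpha> * rho2 a r \<theta> * sin \<theta>) * indicator S r"
      proof (cases "?rm < r \<and> r \<le> M")
        case True
        have E: "E3x M a F (T - rstar r) r \<theta> (P - eta M a r) = Delta M a r / rho2 a r \<theta> * g' r"
          unfolding g'_def
          by (rule E3x_gam) (use True inr Delta_ne rho_ne in \<open>auto simp: rho2_def\<close>)
        show ?thesis using P th condS[of r] sigr[of r] True E
          by (auto simp: q QQ_def hR_def S_def indicator_def)
      qed (auto simp: q QQ_def S_def)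
    qed
    have eS: "indicator {0<..<2*pi} (snd (snd q)) * QS M a u1 rstar (hS M a F) (fst q - sig M a rstar M, fst (snd q), snd (snd q) - eta M a M)
      = ennreal ((g M)\<^sup>2 * rho2 a M \<theta> * sin \<theta>) * indicator S M"
      using P th condS[of M] sigr[of M] cfacts
      by (auto simp: q QS_def hS_def g_def gam_def S_def indicator_def)
    have gamU: "gam M a rstar T \<theta> P r \<in> U" if "?rm < r" "r \<le> M" for r
      unfolding gam_def using spt_U that inr by blast
    have gvd: "(gam M a rstar T \<theta> P has_vector_derivative gv M a \<theta> P r) (at r)" if "?rm < r" "r \<le> M" for r
      using gam_vd[of M a r rstar] that inr[OF that] cfacts(5) rs by blast
    have gd: "(g has_real_derivative g' r) (at r)" if "?rm < r" "r \<le> M" for r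
      unfolding g_def[abs_def] g'_def using curve_deriv[OF U(2) gamU[OF that] gvd[OF that]] .
    have gamc: "continuous_on {?rm<..M} (gam M a rstar T \<theta> P)"
    proof -
      have "\<forall>x\<in>{?rm<..M}. isCont (gam M a rstar T \<theta> P) x"
        using gvd has_vector_derivative_continuous by force
      then show ?thesis by (simp add: continuous_at_imp_continuous_on)
    qed
    have etac: "continuous_on {?rm<..M} (eta M a)"
      by (rule continuous_on_subset[OF eta_cont]) (use inr in auto)
    have gvc: "continuous_on {?rm<..M} (gv M a \<theta> P)"
      unfolding gv_def
      apply (intro continuous_intros Delta_cont etac)
      apply (auto simp: Delta_ne inr)
      done
    have gc: "continuous_on {?rm<..M} g'"
      unfolding g'_def[abs_def] by (rule DFo_cont[OF U(2) gamc gvc]) (use gamU in auto)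
    have \<psi>d: "\<exists>y. (\<psi> has_real_derivative y) (at r) \<and> y < 0" if "?rm < r" "r \<le> M" for r
    proof (intro exI conjI)
      show "(\<psi> has_real_derivative 2 * ((r\<^sup>2 + a\<^sup>2) / Delta M a r) - 1) (at r)"
        unfolding \<psi>_def[abs_def] using rs that inr[OF that] by (auto intro!: derivative_eq_intros)
      have "Delta M a r < 0" using Delta_neg that inr[OF that] by simp
      moreover have "r\<^sup>2 + a\<^sup>2 > 0" using that cfacts by (simp add: add_pos_nonneg)
      ultimately have "(r\<^sup>2 + a\<^sup>2) / Delta M a r < 0" by (simp add: divide_pos_neg)
      then show "2 * ((r\<^sup>2 + a\<^sup>2) / Delta M a r) - 1 < 0" by linarith
    qed
    have \<psi>bm: "\<psi>b \<in> borel_measurable borel"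
      unfolding \<psi>b_def[abs_def] using sig_meas by measurable
    have \<psi>be: "\<psi>b r = \<psi> r" if "?rm < r" "r \<le> M" for r
      using sigr[OF that] by (simp add: \<psi>b_def \<psi>_def)
    have core: "(\<integral>\<^sup>+r. ennreal ((g r)\<^sup>2 / (- Delta M a r) powr \<alpha> * rho2 a r \<theta> * sin \<theta>) * indicator S r \<partial>lborel)
      \<le> ennreal (Cst ?rm M a \<alpha>) * (ennreal ((g M)\<^sup>2 * rho2 a M \<theta> * sin \<theta>) * indicator S M
        + (\<integral>\<^sup>+r. ennreal ((Delta M a r / rho2 a r \<theta> * g' r)\<^sup>2 / (- Delta M a r) powr \<alpha> * rho2 a r \<theta> * sin \<theta>) * indicator S r \<partial>lborel))"
      unfolding S_def
      by (rule core1d[OF cfacts(1-4) al th gd gc \<psi>d \<psi>bm \<psi>be cfacts(5)])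
    show ?thesis unfolding eL eR eS using core .
  qed
qed

lemma main_ineq:
  "vol_int M a rstar M u1 (\<lambda>t r \<theta> \<phi>. (BL F t r \<theta> \<phi>)\<^sup>2 / (- Delta M a r) powr \<alpha>)
   \<le> ennreal (Cst (r_minus M a) M a \<alpha>) * (surf_int M a rstar M u1 (\<lambda>t r \<theta> \<phi>. (BL F t r \<theta> \<phi>)\<^sup>2)
        + vol_int M a rstar M u1 (\<lambda>t r \<theta> \<phi>. (e3 M a F t r \<theta> \<phi>)\<^sup>2 / (- Delta M a r) powr \<alpha>))"
proof -
  let ?C = "ennreal (Cst (r_minus M a) M a \<alpha>)"
  define XL where "XL q = (\<integral>\<^sup>+r. indicator {0<..<2*pi} (snd (snd q)) * QQ M a u1 rstar (hL M a \<alpha> F) (fst q - sig M a rstar r, r, fst (snd q), snd (snd q) - eta M a r) \<partial>lborel)" for q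
  define XR where "XR q = (\<integral>\<^sup>+r. indicator {0<..<2*pi} (snd (snd q)) * QQ M a u1 rstar (hR M a \<alpha> F) (fst q - sig M a rstar r, r, fst (snd q), snd (snd q) - eta M a r) \<partial>lborel)" for q
  define XS where "XS q = indicator {0<..<2*pi} (snd (snd q)) * QS M a u1 rstar (hS M a F) (fst q - sig M a rstar M, fst (snd q), snd (snd q) - eta M a M)" for q
  have L: "vol_int M a rstar M u1 (\<lambda>t r \<theta> \<phi>. (BL F t r \<theta> \<phi>)\<^sup>2 / (- Delta M a r) powr \<alpha>) = (\<integral>\<^sup>+q. XL q \<partial>lborel)"
    unfolding V1 XL_def
    by (rule transform4[OF QQ_meas[OF hL_cont] sig_meas eta_meas QQ_per[OF hL_per]])
  have R: "vol_int M a rstar M u1 (\<lambda>t r \<theta> \<phi>. (e3 M a F t r \<theta> \<phi>)\<^sup>2 / (- Delta M a r) powr \<alpha>) = (\<integral>\<^sup>+q. XR q \<partial>lborel)"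
    unfolding V2 XR_def
    by (rule transform4[OF QQ_meas[OF hR_cont] sig_meas eta_meas QQ_per[OF hR_per]])
  have Sf: "surf_int M a rstar M u1 (\<lambda>t r \<theta> \<phi>. (BL F t r \<theta> \<phi>)\<^sup>2) = (\<integral>\<^sup>+q. XS q \<partial>lborel)"
    unfolding S1 XS_def
    by (rule cv3[OF QS_meas[OF hS_cont]]) (rule QS_per[OF hS_per])
  have mR: "XR \<in> borel_measurable borel"
    unfolding XR_def[abs_def] by (rule transform4_meas[OF QQ_meas[OF hR_cont] sig_meas eta_meas])
  have mS: "XS \<in> borel_measurable borel"
  proof -
    have i: "(\<lambda>q::real\<times>real\<times>real. indicator {0<..<2*pi} (snd (snd q)) :: ennreal) \<in> borel_measurable borel"
      by (rule ind_comp) (intro cont_meas continuous_intros, simp)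
    have s: "(\<lambda>q. QS M a u1 rstar (hS M a F) (fst q - sig M a rstar M, fst (snd q), snd (snd q) - eta M a M)) \<in> borel_measurable borel"
      by (rule mcomp[OF QS_meas[OF hS_cont]]) (intro continuous_intros)
    show ?thesis unfolding XS_def[abs_def] by (intro borel_measurable_times_ennreal i s)
  qed
  have "(\<integral>\<^sup>+q. XL q \<partial>lborel) \<le> (\<integral>\<^sup>+q. ?C * (XS q + XR q) \<partial>lborel)"
    by (rule nn_integral_mono) (unfold XL_def XS_def XR_def, rule PW)
  also have "\<dots> = ?C * (\<integral>\<^sup>+q. XS q + XR q \<partial>lborel)"
    by (rule nn_integral_cmult) (use mS mR in simp)
  also have "(\<integral>\<^sup>+q. XS q + XR q \<partial>lborel) = (\<integral>\<^sup>+q. XS q \<partial>lborel) + (\<integral>\<^sup>+q. XR q \<partial>lborel)"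
    by (rule nn_integral_add) (use mS mR in simp_all)
  finally show ?thesis unfolding L R Sf .
qed

end

theorem mainTheorem9:
  fixes M a \<alpha> u1 :: real and rstar :: "real \<Rightarrow> real"
  assumes "M > 0" and "0 < \<bar>a\<bar>" and "\<bar>a\<bar> < M"
    and "0 \<le> \<alpha>" and "\<alpha> < 1"
    and "\<forall>r. r_minus M a < r \<and> r < r_plus M a \<longrightarrow>
           (rstar has_real_derivative (r\<^sup>2 + a\<^sup>2) / Delta M a r) (at r)"
  shows "\<exists>rt C. r_minus M a < rt \<and> rt < r_plus M a \<and> C > 0 \<and>
    (\<forall>F. smooth_on_kerr M a F \<longrightarrow>
       vol_int M a rstar rt u1 (\<lambda>t r \<theta> \<phi>. (BL F t r \<theta> \<phi>)\<^sup>2 / (- Delta M a r) powr \<alpha>)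
       \<le> ennreal C * (surf_int M a rstar rt u1 (\<lambda>t r \<theta> \<phi>. (BL F t r \<theta> \<phi>)\<^sup>2)
            + vol_int M a rstar rt u1 (\<lambda>t r \<theta> \<phi>. (e3 M a F t r \<theta> \<phi>)\<^sup>2 / (- Delta M a r) powr \<alpha>)))"
proof -
  have kc: "0 < r_minus M a" "r_minus M a < M" "M < r_plus M a"
    using kerr_consts[OF assms(1-3)] by auto
  show ?thesis
  proof (rule exI[of _ M], rule exI[of _ "Cst (r_minus M a) M a \<alpha>"], intro conjI allI impI)
    show "r_minus M a < M" by (rule kc(2))
    show "M < r_plus M a" by (rule kc(3))
    show "0 < Cst (r_minus M a) M a \<alpha>" by (rule Cst_pos[OF kc(1,2) assms(4,5)])
    fix F assume "smooth_on_kerr M a F"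
    then obtain U where "kerr_interior M a \<subseteq> U" "smooth_on U F" unfolding smooth_on_kerr_def by blast
    then show "vol_int M a rstar M u1 (\<lambda>t r \<theta> \<phi>. (BL F t r \<theta> \<phi>)\<^sup>2 / (- Delta M a r) powr \<alpha>)
       \<le> ennreal (Cst (r_minus M a) M a \<alpha>) * (surf_int M a rstar M u1 (\<lambda>t r \<theta> \<phi>. (BL F t r \<theta> \<phi>)\<^sup>2)
            + vol_int M a rstar M u1 (\<lambda>t r \<theta> \<phi>. (e3 M a F t r \<theta> \<phi>)\<^sup>2 / (- Delta M a r) powr \<alpha>))"
      by (rule main_ineq[OF assms])
  qed
qed

end
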